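(* For all integers $d,m\ge1$ there exists a constant $C_{m,d}>0$ depending only on $m,d$ such that for all $B>0$ and $n\ge1$, \[{}^*\sigma^{\mathrm{ad}}_n(\mathcal F_{d,m,B},S_L,D_{\mathrm{abs}})\le O_{m,d}\Big(\min\big\{Bn^{-m/d},\ \exp(C_{m,d}Bn^{-m/d})\,B\,n^{-1/2-m/d}\big\}\Big).\]
   Context: Let $\mathcal X=[0,1]^d$ with Lebesgue measure. For bounded measurable $f:\mathcal X\to\mathbb R$ let $L_f=\log\int_{\mathcal X}e^{f(x)}dx$. For $f\in C^m(\mathcal X)$, $\|f\|_{C^m}=\sup_{\alpha\in\mathbb N_0^d,|\alpha|_1\le m}\|\partial^\alpha f\|_\infty$, and $\mathcal F_{d,m,B}=\{f\in C^m(\mathcal X):\|f\|_{C^m}\le B\}$. $S_L(f)=L_f$, $D_{\mathrm{abs}}(a,b)=|a-b|$. $\mathcal A^{\mathrm{ad}}_n$ is the set of maps $\tilde S=\phi\circ N$ from functions to $\mathbb R$ with $N(f)=(f(x_1),f(x_2),\dots,f(x_n))$, where each $x_k\in\mathcal X$ may depend on $f(x_1),\dots,f(x_{k-1})$, and $\phi:\mathbb R^n\to\mathbb R$ arbitrary. The stochastic adaptive minimax error is ${}^*\sigma^{\mathrm{ad}}_n(\mathcal F,S,D)=\inf\sup_{f\in\mathcal F}\mathbb E_{\omega\sim P_\Omega}D(S(f),\tilde S(\omega)(f))$, where the infimum is over probability spaces $(\Omega,P_\Omega)$ and random variables $\tilde S:\Omega\to\mathcal A^{\mathrm{ad}}_n$.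 Asymptotic notation: $g\le O_{m,d}(h)$ means that for all $m,d$ there is $C'_{m,d}>0$ with $g\le C'_{m,d}h$ for all $B>0$ and all $n\ge1$. *)

theory Defs
  imports "HOL-Analysis.Analysis" "HOL-Probability.Probability"
begin

definition cube :: "(real^'d) set" where
  "cube = cbox 0 1"

definition logint :: "(real^'d \<Rightarrow> real) \<Rightarrow> real" where
  "logint f = ln (integral cube (\<lambda>x. exp (f x)))"

text \<open>D is a family of iterated partial derivatives of f up to order m on the closed cube:
  D [] = f, D (i # is) is the partial derivative in direction i of D is (one-sided at the
  boundary), and all D is with length is \<le> m are continuous on the cube.\<close>
definition Cm_family :: "nat \<Rightarrow> (real^'d \<Rightarrow> real) \<Rightarrow> ('d list \<Rightarrow> real^'d \<Rightarrow> real) \<Rightarrow> bool" where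
  "Cm_family m f D \<longleftrightarrow>
     (\<forall>x\<in>cube. D [] x = f x) \<and>
     (\<forall>is. length is \<le> m \<longrightarrow> continuous_on cube (D is)) \<and>
     (\<forall>is i x. length is < m \<and> x \<in> cube \<longrightarrow>
        ((\<lambda>t. D is (x + t *\<^sub>R axis i 1)) has_real_derivative D (i # is) x)
          (at 0 within {t. x + t *\<^sub>R axis i 1 \<in> cube}))"

definition Fclass :: "nat \<Rightarrow> real \<Rightarrow> (real^'d \<Rightarrow> real) set" where
  "Fclass m B = {f. \<exists>D. Cm_family m f D \<and>
                        (\<forall>is. length is \<le> m \<longrightarrow> (\<forall>x\<in>cube. \<bar>D is x\<bar> \<le> B))}"

fun info :: "(real list \<Rightarrow> 'a) \<Rightarrow> ('a \<Rightarrow> real) \<Rightarrow> nat \<Rightarrow> real list" where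
  "info \<psi> f 0 = []"
| "info \<psi> f (Suc k) = (let ys = info \<psi> f k in ys @ [f (\<psi> ys)])"

text \<open>Admissible randomized adaptive algorithms with n evaluations, on a probability space
  over the sample type 'w: node rules Psi w and reconstruction maps Phi w.\<close>
definition rand_alg ::
  "nat \<Rightarrow> (real^'d \<Rightarrow> real) set \<Rightarrow> 'w measure \<Rightarrow> ('w \<Rightarrow> real list \<Rightarrow> real^'d)
     \<Rightarrow> ('w \<Rightarrow> real list \<Rightarrow> real) \<Rightarrow> bool" where
  "rand_alg n F M \<Psi> \<Phi> \<longleftrightarrow>
     prob_space M \<and>
     (\<forall>\<omega>\<in>space M. \<forall>ys. \<Psi> \<omega> ys \<in> cube) \<and>
     (\<forall>f\<in>F. (\<lambda>\<omega>. \<Phi> \<omega> (info (\<Psi> \<omega>) f n)) \<in> borel_measurable M)"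

definition sigma_ad ::
  "'w itself \<Rightarrow> nat \<Rightarrow> (real^'d \<Rightarrow> real) set \<Rightarrow> ((real^'d \<Rightarrow> real) \<Rightarrow> real) \<Rightarrow> ennreal" where
  "sigma_ad _ n F S =
     (INF alg \<in> {(M :: 'w measure, \<Psi>, \<Phi>). rand_alg n F M \<Psi> \<Phi>}.
        (case alg of (M, \<Psi>, \<Phi>) \<Rightarrow>
          (SUP f\<in>F. \<integral>\<^sup>+ \<omega>. ennreal \<bar>S f - \<Phi> \<omega> (info (\<Psi> \<omega>) f n)\<bar> \<partial>M)))"

end

theory Submission
  imports Defs
begin


definition vupd :: "real^'d \<Rightarrow> 'd \<Rightarrow> real \<Rightarrow> real^'d" where
  "vupd x k t = (\<chi> j. if j = k then t else x$j)"

lemma vupd_nth[simp]: "vupd x k t $ j = (if j = k then t else x$j)"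
  by (simp add: vupd_def)

lemma vupd_same[simp]: "vupd x k (x$k) = x"
  by (simp add: vec_eq_iff)

lemma mem_cube: "x \<in> cube \<longleftrightarrow> (\<forall>j. 0 \<le> x$j \<and> x$j \<le> 1)"
  by (simp add: cube_def mem_box_cart)

lemma vupd_cube: "x \<in> cube \<Longrightarrow> t \<in> {0..1} \<Longrightarrow> vupd x k t \<in> cube"
  by (auto simp: mem_cube)

lemma vupd_shift: "vupd x k t + (s - t) *\<^sub>R axis k 1 = vupd x k s"
  by (simp add: vec_eq_iff axis_def)

lemma line_deriv:
  assumes "Cm_family m f D" "length is < m" "x \<in> cube" "t \<in> {0..1}"
  shows "((\<lambda>s. D is (vupd x k s)) has_real_derivative D (k#is) (vupd x k t)) (at t within {0..1})"
proof -
  let ?y = "vupd x k t"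
  have y: "?y \<in> cube" using assms by (simp add: vupd_cube)
  have d: "((\<lambda>s. D is (?y + s *\<^sub>R axis k 1)) has_real_derivative D (k#is) ?y)
     (at 0 within {s. ?y + s *\<^sub>R axis k 1 \<in> cube})"
    using assms(1,2) y unfolding Cm_family_def by blast
  define g where "g = (\<lambda>s::real. s - t)"
  have gi: "g ` {0..1} \<subseteq> {s. ?y + s *\<^sub>R axis k 1 \<in> cube}"
  proof
    fix u assume "u \<in> g ` {0..1}"
    then obtain s where s0: "s \<in> {0..1}" "u = g s" by blast
    then have s: "s \<in> {0..1}" "u = s - t" by (auto simp: g_def)
    have "?y + u *\<^sub>R axis k 1 = vupd x k s" using s vupd_shift by simp
    then show "u \<in> {s. ?y + s *\<^sub>R axis k 1 \<in> cube}" using s assms(3) vupd_cube by auto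
  qed
  have d2: "((\<lambda>s. D is (?y + s *\<^sub>R axis k 1)) has_real_derivative D (k#is) ?y) (at (g t) within g ` {0..1})"
    using has_field_derivative_subset[OF d gi] by (simp add: g_def)
  have dg: "(g has_real_derivative 1) (at t within {0..1})"
    unfolding g_def by (auto intro!: derivative_eq_intros)
  have "((\<lambda>s. D is (?y + s *\<^sub>R axis k 1)) \<circ> g has_real_derivative D (k#is) ?y * 1) (at t within {0..1})"
    by (rule DERIV_image_chain[OF d2 dg])
  moreover have "((\<lambda>s. D is (?y + s *\<^sub>R axis k 1)) \<circ> g) = (\<lambda>s. D is (vupd x k s))"
    by (auto simp: g_def vupd_shift)
  ultimately show ?thesis by simp
qed


fun Abd :: "nat \<Rightarrow> real \<Rightarrow> real \<Rightarrow> real \<Rightarrow> real \<Rightarrow> real" where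
  "Abd 0 L g \<eta> M = M"
| "Abd (Suc r) L g \<eta> M = \<eta> + L * Abd r L g (2*\<eta>/g) M"

lemma mvt_field:
  fixes f :: "real \<Rightarrow> real"
  assumes "a \<le> b" "\<And>x. x \<in> {a..b} \<Longrightarrow> (f has_real_derivative f' x) (at x within {a..b})"
  shows "\<exists>x\<in>{a..b}. f b - f a = f' x * (b - a)"
proof -
  have "\<exists>x\<in>{a..b}. f b - f a = (\<lambda>h. f' x * h) (b - a)"
    by (rule mvt_very_simple[OF assms(1)]) (use assms(2) in \<open>auto simp: has_field_derivative_def\<close>)
  then show ?thesis by simp
qed

lemma deriv_sub:
  assumes "\<forall>t\<in>{a..b}. (f has_real_derivative f' t) (at t within {a..b})"
    "a \<le> c" "d \<le> b"
  shows "\<forall>t\<in>{c..d}. (f has_real_derivative f' t) (at t within {c..d})"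
proof
  fix t assume t: "t \<in> {c..d}"
  then have "t \<in> {a..b}" "{c..d} \<subseteq> {a..b}" using assms by auto
  then show "(f has_real_derivative f' t) (at t within {c..d})"
    using assms(1) has_field_derivative_subset by blast
qed

lemma mvt_bound:
  fixes f :: "real \<Rightarrow> real"
  assumes "\<forall>t\<in>{a..b}. (f has_real_derivative f' t) (at t within {a..b})"
    "\<forall>t\<in>{a..b}. \<bar>f' t\<bar> \<le> K" "x \<in> {a..b}" "y \<in> {a..b}"
  shows "\<bar>f x - f y\<bar> \<le> K * \<bar>x - y\<bar>"
proof -
  have gen: "\<bar>f v - f u\<bar> \<le> K * \<bar>v - u\<bar>" if "u \<le> v" "u \<in> {a..b}" "v \<in> {a..b}" for u v
  proof -
    have "\<forall>t\<in>{u..v}. (f has_real_derivative f' t) (at t within {u..v})"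
      by (rule deriv_sub[OF assms(1)]) (use that in auto)
    then have "\<exists>w\<in>{u..v}. f v - f u = f' w * (v - u)"
      using that(1) by (intro mvt_field) auto
    then obtain w where w: "w \<in> {u..v}" "f v - f u = f' w * (v - u)" by blast
    have "w \<in> {a..b}" using w that by auto
    then have "\<bar>f' w\<bar> \<le> K" using assms(2) by auto
    then have "\<bar>f v - f u\<bar> = \<bar>f' w\<bar> * \<bar>v - u\<bar>" using w by (simp add: abs_mult)
    also have "\<dots> \<le> K * \<bar>v - u\<bar>" using \<open>\<bar>f' w\<bar> \<le> K\<close> by (simp add: mult_right_mono)
    finally show ?thesis .
  qed
  show ?thesis
  proof (cases "y \<le> x")
    case True then show ?thesis using gen[of y x] assms by auto
  next
    case False then show ?thesis using gen[of x y] assms by (auto simp: abs_minus_commute)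
  qed
qed

lemma L1D:
  fixes \<psi> :: "nat \<Rightarrow> real \<Rightarrow> real"
  assumes "a \<le> b" "g > 0"
    "\<forall>j<r. \<forall>t\<in>{a..b}. (\<psi> j has_real_derivative \<psi> (Suc j) t) (at t within {a..b})"
    "\<forall>t\<in>{a..b}. \<bar>\<psi> r t\<bar> \<le> M"
    "\<forall>i<2^r. z i \<in> {a..b} \<and> \<bar>\<psi> 0 (z i)\<bar> \<le> \<eta>"
    "\<forall>i. Suc i < 2^r \<longrightarrow> z i + g \<le> z (Suc i)"
  shows "\<forall>t\<in>{a..b}. \<bar>\<psi> 0 t\<bar> \<le> Abd r (b-a) g \<eta> M"
  using assms(3-6)
proof (induction r arbitrary: \<psi> z \<eta>)
  case 0
  then show ?case by simp
next
  case (Suc r)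
  have ex: "\<exists>x. i < 2^r \<longrightarrow> x \<in> {z (2*i)..z (2*i+1)} \<and> \<bar>\<psi> 1 x\<bar> \<le> 2*\<eta>/g" for i
  proof (cases "i < 2^r")
    case True
    have i1: "2*i+1 < 2^Suc r" "2*i < 2^Suc r" using True by auto
    have gap: "z (2*i) + g \<le> z (2*i+1)" using Suc.prems(4) i1 by auto
    have zi: "z (2*i) \<in> {a..b}" "z (2*i+1) \<in> {a..b}" "\<bar>\<psi> 0 (z (2*i))\<bar> \<le> \<eta>" "\<bar>\<psi> 0 (z (2*i+1))\<bar> \<le> \<eta>"
      using Suc.prems(3) i1 by auto
    have "\<forall>t\<in>{z (2*i)..z (2*i+1)}. (\<psi> 0 has_real_derivative \<psi> 1 t) (at t within {z (2*i)..z (2*i+1)})"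
      by (rule deriv_sub[of a b]) (use Suc.prems(1) zi in auto)
    then obtain x where x: "x \<in> {z (2*i)..z (2*i+1)}" "\<psi> 0 (z (2*i+1)) - \<psi> 0 (z (2*i)) = \<psi> 1 x * (z (2*i+1) - z (2*i))"
      using mvt_field[of "z (2*i)" "z (2*i+1)" "\<psi> 0" "\<psi> 1"] gap \<open>g > 0\<close> by auto
    have "\<bar>\<psi> 1 x\<bar> * g \<le> \<bar>\<psi> 1 x\<bar> * (z (2*i+1) - z (2*i))"
      using gap by (intro mult_left_mono) auto
    also have "\<dots> = \<bar>\<psi> 0 (z (2*i+1)) - \<psi> 0 (z (2*i))\<bar>" using x gap \<open>g>0\<close> by (simp add: abs_mult)
    also have "\<dots> \<le> 2*\<eta>" using zi by linarith
    finally have "\<bar>\<psi> 1 x\<bar> \<le> 2*\<eta>/g" using \<open>g > 0\<close> by (simp add: field_simps)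
    then show ?thesis using x by blast
  qed simp
  then obtain \<xi> where \<xi>: "\<And>i. i < 2^r \<Longrightarrow> \<xi> i \<in> {z (2*i)..z (2*i+1)} \<and> \<bar>\<psi> 1 (\<xi> i)\<bar> \<le> 2*\<eta>/g"
    by metis
  have IH: "\<forall>t\<in>{a..b}. \<bar>\<psi> 1 t\<bar> \<le> Abd r (b-a) g (2*\<eta>/g) M"
  proof -
    have p1: "\<forall>j<r. \<forall>t\<in>{a..b}. (\<psi> (Suc j) has_real_derivative \<psi> (Suc (Suc j)) t) (at t within {a..b})"
      using Suc.prems(1) by auto
    have p2: "\<forall>t\<in>{a..b}. \<bar>\<psi> (Suc r) t\<bar> \<le> M" using Suc.prems(2) by auto
    have p3: "\<forall>i<2 ^ r. \<xi> i \<in> {a..b} \<and> \<bar>\<psi> (Suc 0) (\<xi> i)\<bar> \<le> 2 * \<eta> / g"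
    proof (intro allI impI)
      fix i :: nat assume i: "i < 2^r"
      have i1: "2*i+1 < 2^Suc r" "2*i < 2^Suc r" using i by auto
      have "z (2*i) \<in> {a..b}" "z (2*i+1) \<in> {a..b}" using Suc.prems(3) i1 by auto
      then show "\<xi> i \<in> {a..b} \<and> \<bar>\<psi> (Suc 0) (\<xi> i)\<bar> \<le> 2 * \<eta> / g" using \<xi>[OF i] by auto
    qed
    have p4: "\<forall>i. Suc i < 2 ^ r \<longrightarrow> \<xi> i + g \<le> \<xi> (Suc i)"
    proof (intro allI impI)
      fix i :: nat assume i: "Suc i < 2^r"
      have i1: "Suc (2*i+1) < 2^Suc r" using i by auto
      have "\<xi> i \<le> z (2*i+1)" using \<xi>[of i] i by auto
      moreover have "z (2*i+1) + g \<le> z (Suc (2*i+1))" using Suc.prems(4) i1 by blast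
      moreover have "z (2*Suc i) \<le> \<xi> (Suc i)" using \<xi>[OF i] by auto
      ultimately show "\<xi> i + g \<le> \<xi> (Suc i)" by simp
    qed
    show ?thesis using Suc.IH[OF p1 p2 _ p4] p3 by simp
  qed
  show ?case
  proof
    fix t assume t: "t \<in> {a..b}"
    have z0: "z 0 \<in> {a..b}" "\<bar>\<psi> 0 (z 0)\<bar> \<le> \<eta>" using Suc.prems(3) by auto
    have d0: "\<forall>t\<in>{a..b}. (\<psi> 0 has_real_derivative \<psi> 1 t) (at t within {a..b})"
      using Suc.prems(1) by auto
    have "\<bar>\<psi> 0 t - \<psi> 0 (z 0)\<bar> \<le> Abd r (b-a) g (2*\<eta>/g) M * \<bar>t - z 0\<bar>"
      by (rule mvt_bound[OF d0 IH t z0(1)])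
    also have "\<dots> \<le> Abd r (b-a) g (2*\<eta>/g) M * (b - a)"
    proof (rule mult_left_mono)
      show "\<bar>t - z 0\<bar> \<le> b - a" using t z0 by auto
      show "0 \<le> Abd r (b-a) g (2*\<eta>/g) M" using IH t by force
    qed
    finally show "\<bar>\<psi> 0 t\<bar> \<le> Abd (Suc r) (b-a) g \<eta> M" using z0 by (simp add: algebra_simps)
  qed
qed


fun alpha :: "nat \<Rightarrow> real \<Rightarrow> real" where
  "alpha 0 \<rho> = 0"
| "alpha (Suc r) \<rho> = 1 + 2 * \<rho> * alpha r \<rho>"

lemma Abd_closed: "g > 0 \<Longrightarrow> Abd r L g \<eta> M = alpha r (L/g) * \<eta> + L^r * M"
  by (induction r arbitrary: \<eta>) (auto simp: field_simps)

lemma alpha_nonneg: "\<rho> \<ge> 0 \<Longrightarrow> alpha r \<rho> \<ge> 0"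
  by (induction r) auto

fun beta :: "nat \<Rightarrow> nat \<Rightarrow> real" where
  "beta m 0 = 0"
| "beta m (Suc s) = alpha m (2^m) * beta m s + 2"

lemma beta_nonneg: "beta m s \<ge> 0"
  by (induction s) (auto intro!: add_nonneg_nonneg mult_nonneg_nonneg alpha_nonneg)

definition Tg :: "nat \<Rightarrow> nat \<Rightarrow> real set" where
  "Tg m K = {real j / real (K * 2^m) | j. j < K * 2^m}"

definition Grid :: "nat \<Rightarrow> nat \<Rightarrow> (real^'d) set" where
  "Grid m K = {x. \<forall>j. x$j \<in> Tg m K}"

lemma cell_exists:
  fixes t :: real
  assumes "K \<ge> 1" "0 \<le> t" "t \<le> 1"
  shows "\<exists>c::nat. c < K \<and> real c \<le> real K * t \<and> real K * t \<le> real c + 1"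
proof (cases "t = 1")
  case True
  then show ?thesis using assms by (intro exI[of _ "K - 1"]) (auto simp: of_nat_diff)
next
  case False
  then have lt: "real K * t < real K" using assms by auto
  define c where "c = nat \<lfloor>real K * t\<rfloor>"
  have f0: "\<lfloor>real K * t\<rfloor> \<ge> 0" using assms by auto
  have "real c = of_int \<lfloor>real K * t\<rfloor>" using f0 by (simp add: c_def)
  moreover have "of_int \<lfloor>real K * t\<rfloor> \<le> real K * t" "real K * t < of_int \<lfloor>real K * t\<rfloor> + 1"
    by linarith+
  moreover have "c < K"
  proof -
    have "of_int \<lfloor>real K * t\<rfloor> < real K" using lt by linarith
    then show ?thesis using \<open>real c = _\<close> by linarith
  qed
  ultimately show ?thesis by (intro exI[of _ c]) auto
qed

definition eZ :: "nat \<Rightarrow> nat \<Rightarrow> real \<Rightarrow> nat \<Rightarrow> real" where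
  "eZ m K B s = beta m s * B * (1 / real K)^m"

lemma Z_step:
  fixes f1 f2 :: "real^'d \<Rightarrow> real"
  assumes C1: "Cm_family m f1 D1" and C2: "Cm_family m f2 D2"
    and B1: "\<forall>is. length is \<le> m \<longrightarrow> (\<forall>x\<in>cube. \<bar>D1 is x\<bar> \<le> B)"
    and B2: "\<forall>is. length is \<le> m \<longrightarrow> (\<forall>x\<in>cube. \<bar>D2 is x\<bar> \<le> B)"
    and K: "K \<ge> 1"
    and IH: "\<forall>y\<in>cube. (\<forall>j. j \<notin> S \<longrightarrow> y$j \<in> Tg m K) \<longrightarrow> \<bar>f1 y - f2 y\<bar> \<le> \<eta>"
    and x: "x \<in> cube" "\<forall>j. j \<notin> insert k S \<longrightarrow> x$j \<in> Tg m K"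
  shows "\<bar>f1 x - f2 x\<bar> \<le> Abd m (1 / real K) (1 / real (K * 2^m)) \<eta> (2*B)"
proof -
  have xk: "0 \<le> x$k" "x$k \<le> 1" using x(1) by (auto simp: mem_cube)
  obtain c :: nat where c: "c < K" "real c \<le> real K * x$k" "real K * x$k \<le> real c + 1"
    using cell_exists[OF K xk] by blast
  define a where "a = real c / real K"
  define b where "b = (real c + 1) / real K"
  have Kp: "real K > 0" using K by auto
  have ab: "a \<le> x$k" "x$k \<le> b" using c Kp by (auto simp: a_def b_def field_simps)
  have a0: "0 \<le> a" by (simp add: a_def)
  have b1: "b \<le> 1" using c Kp by (auto simp: b_def field_simps)
  have bma: "b - a = 1 / real K" by (simp add: a_def b_def add_divide_distrib diff_divide_distrib)
  have sub: "{a..b} \<subseteq> {0..1}" using a0 b1 by auto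
  define \<psi> where "\<psi> = (\<lambda>r t. D1 (replicate r k) (vupd x k t) - D2 (replicate r k) (vupd x k t))"
  define g where "g = 1 / real (K * 2^m)"
  have gpos: "g > 0" using Kp by (simp add: g_def)
  define z where "z = (\<lambda>i. real (c * 2^m + i) / real (K * 2^m))"
  have d: "\<forall>j<m. \<forall>t\<in>{a..b}. (\<psi> j has_real_derivative \<psi> (Suc j) t) (at t within {a..b})"
  proof (intro allI impI ballI)
    fix j t assume j: "j < m" and t: "t \<in> {a..b}"
    have t01: "t \<in> {0..1}" using t sub by auto
    have "((\<lambda>s. D1 (replicate j k) (vupd x k s)) has_real_derivative D1 (k # replicate j k) (vupd x k t)) (at t within {0..1})"
      by (rule line_deriv[OF C1]) (use j x t01 in auto)
    moreover have "((\<lambda>s. D2 (replicate j k) (vupd x k s)) has_real_derivative D2 (k # replicate j k) (vupd x k t)) (at t within {0..1})"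
      by (rule line_deriv[OF C2]) (use j x t01 in auto)
    ultimately have "(\<psi> j has_real_derivative \<psi> (Suc j) t) (at t within {0..1})"
      unfolding \<psi>_def by (auto intro!: derivative_eq_intros)
    then show "(\<psi> j has_real_derivative \<psi> (Suc j) t) (at t within {a..b})"
      using has_field_derivative_subset sub by blast
  qed
  have bd: "\<forall>t\<in>{a..b}. \<bar>\<psi> m t\<bar> \<le> 2*B"
  proof
    fix t assume t: "t \<in> {a..b}"
    then have "vupd x k t \<in> cube" using sub x(1) vupd_cube by blast
    then have "\<bar>D1 (replicate m k) (vupd x k t)\<bar> \<le> B" "\<bar>D2 (replicate m k) (vupd x k t)\<bar> \<le> B"
      using B1 B2 by auto
    then show "\<bar>\<psi> m t\<bar> \<le> 2*B" unfolding \<psi>_def by linarith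
  qed
  have psi0: "\<psi> 0 t = f1 (vupd x k t) - f2 (vupd x k t)" if "t \<in> {0..1}" for t
  proof -
    have "vupd x k t \<in> cube" using that x(1) vupd_cube by blast
    then show ?thesis using C1 C2 unfolding \<psi>_def Cm_family_def by simp
  qed
  have zz: "\<forall>i<2^m. z i \<in> {a..b} \<and> \<bar>\<psi> 0 (z i)\<bar> \<le> \<eta>"
  proof (intro allI impI)
    fix i :: nat assume i: "i < 2^m"
    have KP: "real (K * 2^m) > 0" using Kp by simp
    have "a = real (c * 2^m) / real (K * 2^m)" by (simp add: a_def)
    moreover have "real (c * 2^m) / real (K * 2^m) \<le> real (c * 2^m + i) / real (K * 2^m)"
      using KP by (intro divide_right_mono) auto
    ultimately have za: "a \<le> z i" unfolding z_def by simp
    have "real (c * 2^m + i) \<le> real ((c+1) * 2^m)" using i by simp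
    then have "z i \<le> real ((c+1) * 2^m) / real (K * 2^m)" unfolding z_def using KP
      by (intro divide_right_mono) auto
    also have "\<dots> = b" using Kp by (simp add: b_def field_simps)
    finally have zb: "z i \<le> b" .
    have zT: "z i \<in> Tg m K"
    proof -
      have "c * 2^m + i < K * 2^m"
      proof -
        have "c * 2^m + i < c * 2^m + 2^m" using i by simp
        also have "\<dots> = (c+1) * 2^m" by simp
        also have "\<dots> \<le> K * 2^m" using c(1) by (intro mult_right_mono) auto
        finally show ?thesis .
      qed
      then show ?thesis unfolding Tg_def z_def by blast
    qed
    have zc: "vupd x k (z i) \<in> cube" using za zb a0 b1 x(1) by (intro vupd_cube) auto
    have "\<forall>j. j \<notin> S \<longrightarrow> vupd x k (z i) $ j \<in> Tg m K" using x(2) zT by auto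
    then have "\<bar>f1 (vupd x k (z i)) - f2 (vupd x k (z i))\<bar> \<le> \<eta>" using IH zc by blast
    moreover have "z i \<in> {0..1}" using za zb sub by auto
    ultimately show "z i \<in> {a..b} \<and> \<bar>\<psi> 0 (z i)\<bar> \<le> \<eta>" using psi0 za zb by auto
  qed
  have gap: "\<forall>i. Suc i < 2^m \<longrightarrow> z i + g \<le> z (Suc i)"
    by (auto simp: z_def g_def add_divide_distrib[symmetric] algebra_simps)
  have "\<forall>t\<in>{a..b}. \<bar>\<psi> 0 t\<bar> \<le> Abd m (b-a) g \<eta> (2*B)"
    by (rule L1D[OF _ gpos d bd zz gap]) (use ab in auto)
  then have "\<bar>\<psi> 0 (x$k)\<bar> \<le> Abd m (b-a) g \<eta> (2*B)" using ab by auto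
  moreover have "\<psi> 0 (x$k) = f1 x - f2 x" using psi0[of "x$k"] xk by simp
  ultimately show ?thesis by (simp add: bma g_def)
qed


lemma Z_lemma:
  fixes f1 f2 :: "real^'d \<Rightarrow> real"
  assumes C1: "Cm_family m f1 D1" and C2: "Cm_family m f2 D2"
    and B1: "\<forall>is. length is \<le> m \<longrightarrow> (\<forall>x\<in>cube. \<bar>D1 is x\<bar> \<le> B)"
    and B2: "\<forall>is. length is \<le> m \<longrightarrow> (\<forall>x\<in>cube. \<bar>D2 is x\<bar> \<le> B)"
    and K: "K \<ge> 1"
    and agree: "\<forall>x\<in>cube. (\<forall>j. x$j \<in> Tg m K) \<longrightarrow> f1 x = f2 x"
  shows "\<forall>x\<in>cube. \<bar>f1 x - f2 x\<bar> \<le> beta m CARD('d) * B * (1 / real K)^m"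
proof -
  have Kp: "real K > 0" using K by auto
  have step: "Abd m (1 / real K) (1 / real (K * 2^m)) (eZ m K B s) (2*B) = eZ m K B (Suc s)" for s
  proof -
    have "(1 / real K) / (1 / real (K * 2^m)) = 2^m" using Kp by (simp add: field_simps)
    then show ?thesis using Kp by (simp add: Abd_closed eZ_def algebra_simps)
  qed
  have "finite S \<Longrightarrow> \<forall>y\<in>cube. (\<forall>j. j \<notin> S \<longrightarrow> y$j \<in> Tg m K) \<longrightarrow> \<bar>f1 y - f2 y\<bar> \<le> eZ m K B (card S)" for S :: "'d set"
  proof (induction S rule: finite_induct)
    case empty
    then show ?case using agree by (simp add: eZ_def)
  next
    case (insert k S)
    show ?case
    proof (intro ballI impI)
      fix x :: "real^'d" assume x: "x \<in> cube" "\<forall>j. j \<notin> insert k S \<longrightarrow> x$j \<in> Tg m K"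
      have "\<bar>f1 x - f2 x\<bar> \<le> Abd m (1 / real K) (1 / real (K * 2^m)) (eZ m K B (card S)) (2*B)"
        by (rule Z_step[OF C1 C2 B1 B2 K insert.IH x])
      then show "\<bar>f1 x - f2 x\<bar> \<le> eZ m K B (card (insert k S))" using insert.hyps step by simp
    qed
  qed
  from this[of UNIV] show ?thesis by (simp add: eZ_def)
qed


lemma grid_image: "{x::real^'d. \<forall>j. x$j \<in> T} = vec_lambda ` (PiE UNIV (\<lambda>_. T))"
proof (intro equalityI subsetI)
  fix x :: "real^'d" assume "x \<in> {x. \<forall>j. x$j \<in> T}"
  then have "(\<lambda>j. x$j) \<in> PiE UNIV (\<lambda>_. T)" by auto
  moreover have "x = vec_lambda (\<lambda>j. x$j)" by simp
  ultimately show "x \<in> vec_lambda ` (PiE UNIV (\<lambda>_. T))" by blast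
qed auto

lemma grid_finite: "finite T \<Longrightarrow> finite {x::real^'d. \<forall>j. x$j \<in> T}"
  unfolding grid_image by (intro finite_imageI finite_PiE) auto

lemma grid_card: "finite T \<Longrightarrow> card {x::real^'d. \<forall>j. x$j \<in> T} \<le> card T ^ CARD('d)"
proof -
  assume T: "finite T"
  have "card {x::real^'d. \<forall>j. x$j \<in> T} \<le> card (PiE (UNIV::'d set) (\<lambda>_. T))"
    unfolding grid_image by (intro card_image_le finite_PiE) (use T in auto)
  also have "\<dots> = card T ^ CARD('d)" by (simp add: card_PiE)
  finally show ?thesis .
qed

lemma Tg_finite: "finite (Tg m K)"
proof -
  have "Tg m K = (\<lambda>j. real j / real (K * 2^m)) ` {..<K * 2^m}" by (auto simp: Tg_def)
  then show ?thesis by simp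
qed

lemma Tg_card: "card (Tg m K) \<le> K * 2^m"
proof -
  have "Tg m K = (\<lambda>j. real j / real (K * 2^m)) ` {..<K * 2^m}" by (auto simp: Tg_def)
  then show ?thesis using card_image_le[of "{..<K * 2^m}"] by simp
qed

lemma Tg_unit: "t \<in> Tg m K \<Longrightarrow> 0 \<le> t \<and> t \<le> 1"
proof -
  assume "t \<in> Tg m K"
  then obtain j where j: "j < K * 2^m" "t = real j / real (K * 2^m)" by (auto simp: Tg_def)
  then have "j \<le> K * 2^m" by simp
  then have "real j \<le> real (K * 2^m)" by (simp only: of_nat_le_iff)
  then show ?thesis using j by (auto simp: divide_le_eq_1)
qed

lemma Grid_finite: "finite (Grid m K :: (real^'d) set)"
  unfolding Grid_def by (intro grid_finite Tg_finite)

lemma Grid_card: "card (Grid m K :: (real^'d) set) \<le> (K * 2^m) ^ CARD('d)"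
proof -
  have "card (Grid m K :: (real^'d) set) \<le> card (Tg m K) ^ CARD('d)"
    unfolding Grid_def by (intro grid_card Tg_finite)
  also have "\<dots> \<le> (K * 2^m) ^ CARD('d)" by (intro power_mono Tg_card) auto
  finally show ?thesis .
qed

lemma Grid_cube: "x \<in> Grid m K \<Longrightarrow> x \<in> cube"
  by (auto simp: Grid_def mem_cube dest: Tg_unit)

lemma content_cube: "Henstock_Kurzweil_Integration.content (cube :: (real^'d) set) = 1"
proof -
  have "(0::real^'d) \<in> cbox 0 1" by (simp add: mem_box_cart)
  then have "cbox (0::real^'d) 1 \<noteq> {}" by blast
  then show ?thesis by (simp add: cube_def content_cbox_cart)
qed

lemma Fclass_D:
  assumes "f \<in> Fclass m B"
  obtains D where "Cm_family m f D" "\<forall>is. length is \<le> m \<longrightarrow> (\<forall>x\<in>cube. \<bar>D is x\<bar> \<le> B)"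
  using assms unfolding Fclass_def by blast

lemma Fclass_cont: "f \<in> Fclass m B \<Longrightarrow> continuous_on cube f"
proof -
  assume f: "f \<in> Fclass m B"
  obtain D where D: "Cm_family m f D" "\<forall>is. length is \<le> m \<longrightarrow> (\<forall>x\<in>cube. \<bar>D is x\<bar> \<le> B)"
    by (rule Fclass_D[OF f])
  have c: "\<forall>is. length is \<le> m \<longrightarrow> continuous_on cube (D is)" and e: "\<forall>x\<in>cube. D [] x = f x"
    using D(1) unfolding Cm_family_def by auto
  have "continuous_on cube (D [])" using c[rule_format, of "[]"] by simp
  moreover have "continuous_on cube f = continuous_on cube (D [])"
    by (rule continuous_on_cong) (use e in auto)
  ultimately show ?thesis by simp
qed

lemma Fclass_bound: "f \<in> Fclass m B \<Longrightarrow> x \<in> cube \<Longrightarrow> \<bar>f x\<bar> \<le> B"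
proof -
  assume f: "f \<in> Fclass m B" and x: "x \<in> cube"
  obtain D where D: "Cm_family m f D" "\<forall>is. length is \<le> m \<longrightarrow> (\<forall>x\<in>cube. \<bar>D is x\<bar> \<le> B)"
    by (rule Fclass_D[OF f])
  have "\<bar>D [] x\<bar> \<le> B" using D(2)[rule_format, of "[]"] x by simp
  moreover have "D [] x = f x" using D(1) x unfolding Cm_family_def by blast
  ultimately show ?thesis by simp
qed

lemma exp_integral_pos:
  fixes h :: "real^'d \<Rightarrow> real"
  assumes "continuous_on cube h" "\<forall>x\<in>cube. \<bar>h x\<bar> \<le> B0"
  shows "integral cube (\<lambda>x. exp (h x)) \<ge> exp (- B0)"
    and "(\<lambda>x. exp (h x)) integrable_on cube"
proof -
  show intg: "(\<lambda>x. exp (h x)) integrable_on cube"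
    unfolding cube_def by (rule integrable_continuous) (use continuous_on_exp[OF assms(1)] in \<open>simp add: cube_def\<close>)
  have "integral cube (\<lambda>x::real^'d. exp (- B0)) \<le> integral cube (\<lambda>x. exp (h x))"
  proof (rule Henstock_Kurzweil_Integration.integral_le[OF _ intg])
    show "(\<lambda>x::real^'d. exp (- B0)) integrable_on cube" unfolding cube_def by (rule integrable_const)
    show "exp (- B0) \<le> exp (h x)" if "x \<in> cube" for x using assms(2) that by auto
  qed
  then show "integral cube (\<lambda>x. exp (h x)) \<ge> exp (- B0)"
    using content_cube[where 'd='d] by (simp add: cube_def integral_const)
qed

lemma logint_mono:
  fixes h1 h2 :: "real^'d \<Rightarrow> real"
  assumes "continuous_on cube h1" "continuous_on cube h2"
    "\<forall>x\<in>cube. \<bar>h1 x\<bar> \<le> B0" "\<forall>x\<in>cube. \<bar>h2 x\<bar> \<le> B0"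
    "\<forall>x\<in>cube. h1 x \<le> h2 x + c"
  shows "logint h1 \<le> logint h2 + c"
proof -
  note p1 = exp_integral_pos[OF assms(1,3)] and p2 = exp_integral_pos[OF assms(2,4)]
  have "integral cube (\<lambda>x. exp (h1 x)) \<le> integral cube (\<lambda>x. exp c * exp (h2 x))"
  proof (rule Henstock_Kurzweil_Integration.integral_le[OF p1(2)])
    show "(\<lambda>x. exp c * exp (h2 x)) integrable_on cube" using integrable_on_cmult_left[OF p2(2), of "exp c"] by simp
    show "exp (h1 x) \<le> exp c * exp (h2 x)" if "x \<in> cube" for x
      using assms(5) that by (auto simp: exp_add[symmetric] add.commute)
  qed
  also have "\<dots> = exp c * integral cube (\<lambda>x. exp (h2 x))" by simp
  finally have le: "integral cube (\<lambda>x. exp (h1 x)) \<le> exp c * integral cube (\<lambda>x. exp (h2 x))" .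
  have pos1: "integral cube (\<lambda>x. exp (h1 x)) > 0" using p1(1) by (meson exp_gt_zero less_le_trans)
  have pos2: "integral cube (\<lambda>x. exp (h2 x)) > 0" using p2(1) by (meson exp_gt_zero less_le_trans)
  have "logint h1 \<le> ln (exp c * integral cube (\<lambda>x. exp (h2 x)))"
    unfolding logint_def using le pos1 by simp
  also have "\<dots> = c + logint h2" using pos2 by (simp add: ln_mult logint_def)
  finally show ?thesis by simp
qed

lemma Fclass_close:
  fixes f1 f2 :: "real^'d \<Rightarrow> real"
  assumes "f1 \<in> Fclass m B" "f2 \<in> Fclass m B" "K \<ge> 1"
    "\<forall>x\<in>Grid m K. f1 x = f2 x"
  shows "\<forall>x\<in>cube. \<bar>f1 x - f2 x\<bar> \<le> beta m CARD('d) * B * (1 / real K)^m"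
proof -
  obtain D1 where D1: "Cm_family m f1 D1" "\<forall>is. length is \<le> m \<longrightarrow> (\<forall>x\<in>cube. \<bar>D1 is x\<bar> \<le> B)"
    by (rule Fclass_D[OF assms(1)])
  obtain D2 where D2: "Cm_family m f2 D2" "\<forall>is. length is \<le> m \<longrightarrow> (\<forall>x\<in>cube. \<bar>D2 is x\<bar> \<le> B)"
    by (rule Fclass_D[OF assms(2)])
  show ?thesis
    by (rule Z_lemma[OF D1(1) D2(1) D1(2) D2(2) assms(3)]) (use assms(4) in \<open>auto simp: Grid_def\<close>)
qed

lemma logint_close:
  fixes f1 f2 :: "real^'d \<Rightarrow> real"
  assumes "f1 \<in> Fclass m B" "f2 \<in> Fclass m B" "\<forall>x\<in>cube. \<bar>f1 x - f2 x\<bar> \<le> E"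
  shows "\<bar>logint f1 - logint f2\<bar> \<le> E"
proof -
  have c: "continuous_on cube f1" "continuous_on cube f2" using assms Fclass_cont by blast+
  have b: "\<forall>x\<in>cube. \<bar>f1 x\<bar> \<le> B" "\<forall>x\<in>cube. \<bar>f2 x\<bar> \<le> B" using assms Fclass_bound by blast+
  have "logint f1 \<le> logint f2 + E" by (rule logint_mono[OF c b]) (use assms(3) in \<open>auto simp: abs_le_iff\<close>)
  moreover have "logint f2 \<le> logint f1 + E" by (rule logint_mono[OF c(2,1) b(2,1)]) (use assms(3) in \<open>auto simp: abs_le_iff\<close>)
  ultimately show ?thesis by linarith
qed

lemma logint_bound:
  fixes f :: "real^'d \<Rightarrow> real"
  assumes "f \<in> Fclass m B"
  shows "\<bar>logint f\<bar> \<le> B"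
proof -
  have c: "continuous_on cube f" "continuous_on cube (\<lambda>_. 0::real)" using assms Fclass_cont by auto
  have b: "\<forall>x\<in>cube. \<bar>f x\<bar> \<le> B" using assms Fclass_bound by blast
  have "(0::real^'d) \<in> cube" by (simp add: mem_cube)
  then have "0 \<le> B" using b by (metis abs_ge_zero order_trans)
  then have b0: "\<forall>x\<in>cube. \<bar>(\<lambda>_. 0::real) x\<bar> \<le> B" by simp
  have l0: "logint (\<lambda>_::real^'d. 0::real) = 0"
    using content_cube[where 'd='d] by (simp add: logint_def integral_const cube_def)
  have "logint f \<le> logint (\<lambda>_::real^'d. 0::real) + B" by (rule logint_mono[OF c b b0]) (use b in \<open>auto simp: abs_le_iff\<close>)
  moreover have "logint (\<lambda>_::real^'d. 0::real) \<le> logint f + B" by (rule logint_mono[OF c(2,1) b0 b]) (use b in \<open>auto simp: abs_le_iff\<close>)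
  ultimately show ?thesis using l0 by simp
qed


lemma info_length[simp]: "length (info \<psi> f n) = n"
  by (induction n) (auto simp: Let_def)

lemma info_nth: "j < n \<Longrightarrow> info \<psi> f n ! j = f (\<psi> (info \<psi> f j))"
proof (induction n)
  case 0 then show ?case by simp
next
  case (Suc n)
  show ?case
  proof (cases "j < n")
    case True
    then show ?thesis using Suc by (simp add: Let_def nth_append)
  next
    case False
    then have "j = n" using Suc.prems by simp
    then show ?thesis by (simp add: Let_def nth_append)
  qed
qed

lemma info_take: "j \<le> n \<Longrightarrow> take j (info \<psi> f n) = info \<psi> f j"
proof (induction n)
  case 0 then show ?case by simp
next
  case (Suc n)
  show ?case
  proof (cases "j = Suc n")
    case True
    then show ?thesis by (metis info_length order_refl take_all)
  next
    case False
    then have "j \<le> n" using Suc.prems by simp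
    then show ?thesis using Suc.IH by (simp add: Let_def)
  qed
qed

lemma sigma_le:
  fixes M :: "'w measure"
  assumes "rand_alg n F M \<Psi> \<Phi>"
    "\<forall>f\<in>F. (\<integral>\<^sup>+ \<omega>. ennreal \<bar>S f - \<Phi> \<omega> (info (\<Psi> \<omega>) f n)\<bar> \<partial>M) \<le> b"
  shows "sigma_ad TYPE('w) n F S \<le> b"
  unfolding sigma_ad_def
  by (rule INF_lower2[of "(M,\<Psi>,\<Phi>)"]) (use assms in \<open>auto intro: SUP_least\<close>)

lemma pmf_rand_alg:
  assumes "finite \<Omega>" "\<Omega> \<noteq> {}" "\<forall>\<omega> ys. \<Psi> \<omega> ys \<in> cube"
  shows "rand_alg n F (measure_pmf (pmf_of_set \<Omega>)) \<Psi> \<Phi>"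
  unfolding rand_alg_def using assms by (auto simp: prob_space_measure_pmf)

lemma pmf_avg:
  assumes "finite \<Omega>" "\<Omega> \<noteq> {}" "\<forall>\<omega>\<in>\<Omega>. e \<omega> \<ge> 0"
  shows "(\<integral>\<^sup>+\<omega>. ennreal (e \<omega>) \<partial>measure_pmf (pmf_of_set \<Omega>)) = ennreal ((\<Sum>\<omega>\<in>\<Omega>. e \<omega>) / card \<Omega>)"
proof -
  have "(\<integral>\<^sup>+\<omega>. ennreal (e \<omega>) \<partial>measure_pmf (pmf_of_set \<Omega>)) = (\<Sum>\<omega>\<in>\<Omega>. ennreal (e \<omega>)) / of_nat (card \<Omega>)"
    by (rule nn_integral_pmf_of_set[OF assms(2,1)])
  also have "\<dots> = ennreal (\<Sum>\<omega>\<in>\<Omega>. e \<omega>) / ennreal (real (card \<Omega>))"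
    using assms(3) by (simp add: sum_ennreal ennreal_of_nat_eq_real_of_nat)
  also have "\<dots> = ennreal ((\<Sum>\<omega>\<in>\<Omega>. e \<omega>) / card \<Omega>)"
    using assms by (intro divide_ennreal) (auto intro: sum_nonneg simp: card_gt_0_iff)
  finally show ?thesis .
qed

definition nodes :: "nat \<Rightarrow> nat \<Rightarrow> (real^'d) list" where
  "nodes m K = (SOME xs. set xs = Grid m K \<and> distinct xs)"

lemma nodes_set: "set (nodes m K) = Grid m K" and nodes_distinct: "distinct (nodes m K)"
proof -
  have "\<exists>xs. set xs = (Grid m K :: (real^'d) set) \<and> distinct xs"
    by (rule finite_distinct_list[OF Grid_finite])
  then have "set (nodes m K) = (Grid m K :: (real^'d) set) \<and> distinct (nodes m K :: (real^'d) list)"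
    unfolding nodes_def by (rule someI_ex)
  then show "set (nodes m K) = Grid m K" "distinct (nodes m K)" by auto
qed

lemma nodes_length: "length (nodes m K :: (real^'d) list) \<le> (K * 2^m) ^ CARD('d)"
proof -
  have "length (nodes m K :: (real^'d) list) = card (Grid m K :: (real^'d) set)"
    using distinct_card[OF nodes_distinct] nodes_set by metis
  then show ?thesis using Grid_card by (metis)
qed

definition PsiD :: "(real^'d) list \<Rightarrow> real list \<Rightarrow> real^'d" where
  "PsiD xs ys = (if length ys < length xs then xs ! length ys else 0)"

definition consist :: "nat \<Rightarrow> real \<Rightarrow> (real^'d) list \<Rightarrow> real list \<Rightarrow> (real^'d \<Rightarrow> real) set" where
  "consist m B xs ys = {h \<in> Fclass m B. \<forall>j<length xs. h (xs!j) = ys!j}"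

definition PhiD :: "nat \<Rightarrow> real \<Rightarrow> (real^'d) list \<Rightarrow> real list \<Rightarrow> real" where
  "PhiD m B xs ys = Sup (logint ` consist m B xs ys)"

lemma PsiD_cube: "PsiD (nodes m K :: (real^'d) list) ys \<in> cube"
proof (cases "length ys < length (nodes m K :: (real^'d) list)")
  case True
  then have "(nodes m K :: (real^'d) list) ! length ys \<in> (Grid m K :: (real^'d) set)"
    using nodes_set nth_mem by metis
  then have "(nodes m K :: (real^'d) list) ! length ys \<in> cube" by (rule Grid_cube)
  then show ?thesis using True by (simp add: PsiD_def)
next
  case False
  then show ?thesis by (simp add: PsiD_def mem_cube)
qed

lemma info_nodes:
  assumes "length xs \<le> n" "j < length xs"
  shows "info (PsiD xs) f n ! j = f (xs ! j)"
  using assms by (simp add: info_nth PsiD_def)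

lemma info_nodes_gen:
  assumes "\<forall>ys. length ys < length xs \<longrightarrow> \<Psi> ys = xs ! length ys" "length xs \<le> n" "j < length xs"
  shows "info \<Psi> f n ! j = f (xs ! j)"
  using assms by (simp add: info_nth)

lemma consist_close:
  fixes f :: "real^'d \<Rightarrow> real"
  assumes "K \<ge> 1" "f \<in> Fclass m B" "\<forall>j<length (nodes m K :: (real^'d) list). ys ! j = f (nodes m K ! j)"
    "h \<in> consist m B (nodes m K) ys"
  shows "\<forall>x\<in>cube. \<bar>h x - f x\<bar> \<le> beta m CARD('d) * B * (1 / real K)^m"
proof -
  have hF: "h \<in> Fclass m B" using assms(4) by (simp add: consist_def)
  have "\<forall>x\<in>Grid m K. h x = f x"
  proof
    fix x :: "real^'d" assume "x \<in> Grid m K"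
    then obtain j where j: "j < length (nodes m K :: (real^'d) list)" "x = nodes m K ! j"
      using nodes_set by (metis in_set_conv_nth)
    then show "h x = f x" using assms(3,4) by (simp add: consist_def)
  qed
  then show ?thesis by (rule Fclass_close[OF hF assms(2,1)])
qed

lemma det_error:
  fixes f :: "real^'d \<Rightarrow> real"
  assumes "K \<ge> 1" "f \<in> Fclass m B" "\<forall>j<length (nodes m K :: (real^'d) list). ys ! j = f (nodes m K ! j)"
  shows "\<bar>logint f - PhiD m B (nodes m K :: (real^'d) list) ys\<bar> \<le> beta m CARD('d) * B * (1 / real K)^m"
proof -
  let ?E = "beta m CARD('d) * B * (1 / real K)^m"
  let ?S = "logint ` consist m B (nodes m K :: (real^'d) list) ys"
  have fin: "f \<in> consist m B (nodes m K) ys" using assms(2,3) by (simp add: consist_def)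
  have cl: "\<bar>logint h - logint f\<bar> \<le> ?E" if "h \<in> consist m B (nodes m K) ys" for h :: "real^'d \<Rightarrow> real"
  proof -
    have hF: "h \<in> Fclass m B" using that by (simp add: consist_def)
    show ?thesis by (rule logint_close[OF hF assms(2) consist_close[OF assms that]])
  qed
  have bdd: "bdd_above ?S"
    by (rule bdd_aboveI[of _ "logint f + ?E"]) (use cl in force)
  have ne: "?S \<noteq> {}" using fin by blast
  have "logint f \<le> Sup ?S" by (rule cSup_upper[OF _ bdd]) (use fin in blast)
  moreover have "Sup ?S \<le> logint f + ?E" by (rule cSup_least[OF ne]) (use cl in force)
  moreover have "PhiD m B (nodes m K :: (real^'d) list) ys = Sup ?S" by (simp add: PhiD_def)
  ultimately show ?thesis by (simp add: abs_le_iff)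
qed


lemma det_alg_bound:
  fixes F :: "(real^'d \<Rightarrow> real) set" and \<Psi> :: "real list \<Rightarrow> real^'d"
  assumes "\<forall>ys. \<Psi> ys \<in> cube" "\<forall>f\<in>F. \<bar>S f - \<Phi> (info \<Psi> f n)\<bar> \<le> b"
  shows "sigma_ad TYPE(nat \<Rightarrow> real) n F S \<le> ennreal b"
proof -
  define \<Omega> :: "(nat \<Rightarrow> real) set" where "\<Omega> = {\<lambda>_. 0}"
  have fin: "finite \<Omega>" "\<Omega> \<noteq> {}" by (auto simp: \<Omega>_def)
  have alg: "rand_alg n F (measure_pmf (pmf_of_set \<Omega>)) (\<lambda>\<omega>. \<Psi>) (\<lambda>\<omega>. \<Phi>)"
    by (rule pmf_rand_alg[OF fin]) (use assms(1) in auto)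
  show ?thesis
  proof (rule sigma_le[OF alg], intro ballI)
    fix f assume f: "f \<in> F"
    have "(\<integral>\<^sup>+ \<omega>. ennreal \<bar>S f - \<Phi> (info \<Psi> f n)\<bar> \<partial>measure_pmf (pmf_of_set \<Omega>))
        = ennreal ((\<Sum>\<omega>\<in>\<Omega>. \<bar>S f - \<Phi> (info \<Psi> f n)\<bar>) / card \<Omega>)"
      by (rule pmf_avg[OF fin]) auto
    also have "\<dots> = ennreal \<bar>S f - \<Phi> (info \<Psi> f n)\<bar>" by (simp add: \<Omega>_def)
    also have "\<dots> \<le> ennreal b" using assms(2) f by (intro ennreal_leI) auto
    finally show "(\<integral>\<^sup>+ \<omega>. ennreal \<bar>S f - \<Phi> (info \<Psi> f n)\<bar> \<partial>measure_pmf (pmf_of_set \<Omega>)) \<le> ennreal b" .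
  qed
qed

lemma powr_root_pow:
  assumes "x > 0" "d \<ge> 1"
  shows "(x powr (1/real d))^k = x powr (real k / real d)"
proof -
  have "(x powr (1/real d))^k = (x powr (1/real d)) powr real k"
    using assms by (simp add: powr_realpow)
  also have "\<dots> = x powr (real k / real d)" by (simp add: powr_powr)
  finally show ?thesis .
qed

lemma powr_root_d:
  assumes "x > 0" "d \<ge> 1"
  shows "(x powr (1/real d))^d = x"
  using powr_root_pow[OF assms, of d] assms by simp

lemma pow_root:
  assumes "x > 0" "d \<ge> 1"
  shows "(x ^ d) powr (1/real d) = x"
proof -
  have "(x ^ d) powr (1/real d) = (x powr real d) powr (1/real d)" using assms by (simp add: powr_realpow)
  also have "\<dots> = x" using assms by (simp add: powr_powr)
  finally show ?thesis .
qed

definition cdet :: "nat \<Rightarrow> nat \<Rightarrow> real" where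
  "cdet m d = (beta m d + 1) * 2^m * 2^(m*m)"

lemma card_ge1: "CARD('d::finite) \<ge> 1"
  using finite_UNIV_card_ge_0[where 'a='d] by simp

lemma det_main:
  fixes B :: real and n :: nat
  assumes B: "B > 0" and n: "n \<ge> 1"
  shows "sigma_ad TYPE(nat \<Rightarrow> real) n (Fclass m B :: (real^'d \<Rightarrow> real) set) logint
    \<le> ennreal (cdet m CARD('d) * B * real n powr (-(real m / real CARD('d))))"
proof -
  define d where "d = CARD('d)"
  have d1: "d \<ge> 1" unfolding d_def by (rule card_ge1)
  define P :: nat where "P = 2^m"
  have P1: "P \<ge> 1" by (simp add: P_def)
  have npos: "real n > 0" using n by simp
  define r where "r = real n powr (1/real d)"
  have rpos: "r > 0" using npos by (simp add: r_def)
  have rate: "real n powr (-(real m / real d)) = 1 / r^m"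
    using powr_root_pow[OF npos d1, of m] by (simp add: r_def powr_minus_divide)
  have b0: "beta m d \<ge> 0" by (rule beta_nonneg)
  show ?thesis
  proof (cases "n \<ge> P^d")
    case True
    have "real P = (real P ^ d) powr (1/real d)" using pow_root[of "real P" d] P1 d1 by simp
    also have "\<dots> \<le> r" unfolding r_def using True by (intro powr_mono2) (auto simp flip: of_nat_power)
    finally have Pr: "real P \<le> r" .
    define y where "y = r / real P"
    have y1: "y \<ge> 1" using Pr P1 by (simp add: y_def)
    define K where "K = nat \<lfloor>y\<rfloor>"
    have K1: "K \<ge> 1" using y1 by (simp add: K_def le_nat_iff)
    have Ky: "real K \<le> y" using y1 by (simp add: K_def)
    have yK: "y \<le> 2 * real K"
    proof -
      have "y < of_int \<lfloor>y\<rfloor> + 1" by linarith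
      moreover have "real K = of_int \<lfloor>y\<rfloor>" using y1 by (simp add: K_def)
      ultimately show ?thesis using K1 by linarith
    qed
    let ?xs = "nodes m K :: (real^'d) list"
    have len: "length ?xs \<le> n"
    proof -
      have "real (K * P) \<le> r" using Ky P1 by (simp add: y_def field_simps)
      then have "real (K * P) ^ d \<le> r ^ d" by (intro power_mono) auto
      also have "\<dots> = real n" unfolding r_def by (rule powr_root_d[OF npos d1])
      finally have "(K * P) ^ d \<le> n" by (metis of_nat_le_iff of_nat_mult of_nat_power)
      then show ?thesis using nodes_length[where 'd='d, of m K] by (simp add: P_def d_def)
    qed
    have err: "\<forall>f\<in>(Fclass m B :: (real^'d \<Rightarrow> real) set).
        \<bar>logint f - PhiD m B ?xs (info (PsiD ?xs) f n)\<bar> \<le> beta m d * B * (1 / real K)^m"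
    proof
      fix f :: "real^'d \<Rightarrow> real" assume f: "f \<in> Fclass m B"
      show "\<bar>logint f - PhiD m B ?xs (info (PsiD ?xs) f n)\<bar> \<le> beta m d * B * (1 / real K)^m"
        unfolding d_def by (rule det_error[OF K1 f]) (use info_nodes[OF len] in auto)
    qed
    have bnd: "beta m d * B * (1 / real K)^m \<le> cdet m d * B * real n powr (-(real m / real d))"
    proof -
      have Kpos: "real K > 0" using K1 by simp
      have "1 / real K \<le> 2 / y" using yK Kpos y1 by (simp add: field_simps)
      also have "\<dots> = 2 * real P / r" by (simp add: y_def)
      finally have "(1 / real K)^m \<le> (2 * real P / r)^m" by (intro power_mono) auto
      also have "\<dots> = 2^m * 2^(m*m) * (1 / r^m)"
        by (simp add: P_def power_divide power_mult_distrib power_mult[symmetric] mult.commute)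
      finally have k: "(1 / real K)^m \<le> 2^m * 2^(m*m) * (1 / r^m)" .
      have "beta m d * B * (1 / real K)^m \<le> beta m d * B * (2^m * 2^(m*m) * (1 / r^m))"
        using k b0 B by (intro mult_left_mono) auto
      also have "\<dots> \<le> (beta m d + 1) * B * (2^m * 2^(m*m) * (1 / r^m))"
        using B rpos by (intro mult_right_mono) auto
      finally show ?thesis by (simp add: cdet_def rate mult_ac)
    qed
    show ?thesis
    proof (rule det_alg_bound[where \<Psi>="PsiD ?xs" and \<Phi>="PhiD m B ?xs"])
      show "\<forall>ys. PsiD ?xs ys \<in> cube" using PsiD_cube by blast
      show "\<forall>f\<in>(Fclass m B :: (real^'d \<Rightarrow> real) set). \<bar>logint f - PhiD m B ?xs (info (PsiD ?xs) f n)\<bar>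
          \<le> cdet m CARD('d) * B * real n powr (- (real m / real CARD('d)))"
        using err bnd unfolding d_def by fastforce
    qed
  next
    case False
    then have "real n \<le> real P ^ d" by (simp flip: of_nat_power)
    then have "r \<le> (real P ^ d) powr (1/real d)" unfolding r_def by (intro powr_mono2) auto
    also have "\<dots> = real P" using pow_root[of "real P" d] P1 d1 by simp
    finally have rP: "r \<le> real P" .
    have "1 \<le> real P^m / r^m"
      using rP rpos by (simp add: power_mono)
    then have "B * 1 \<le> B * (real P^m / r^m)" using B by (intro mult_left_mono) auto
    then have "B \<le> B * (real P^m / r^m)" by simp
    also have "\<dots> \<le> cdet m d * B * real n powr (-(real m / real d))"
    proof -
      have "real P^m = 2^(m*m)" by (simp add: P_def power_mult)
      then have "B * (real P^m / r^m) = 2^(m*m) * B * (1 / r^m)" by simp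
      also have "\<dots> \<le> ((beta m d + 1) * 2^m * 2^(m*m)) * B * (1 / r^m)"
      proof (intro mult_right_mono)
        have "(1::real) * 1 \<le> (beta m d + 1) * 2^m" using b0 by (intro mult_mono) auto
        then show "2^(m*m) \<le> (beta m d + 1) * 2^m * 2^(m*m)" by simp
      qed (use B rpos in auto)
      finally show ?thesis by (simp add: cdet_def rate)
    qed
    finally have bB: "B \<le> cdet m d * B * real n powr (-(real m / real d))" .
    show ?thesis
    proof (rule det_alg_bound[where \<Psi>="\<lambda>_. 0" and \<Phi>="\<lambda>_. 0"])
      show "\<forall>ys. (0::real^'d) \<in> cube" by (simp add: mem_cube)
      show "\<forall>f\<in>(Fclass m B :: (real^'d \<Rightarrow> real) set). \<bar>logint f - 0\<bar>
          \<le> cdet m CARD('d) * B * real n powr (- (real m / real CARD('d)))"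
      proof
        fix f :: "real^'d \<Rightarrow> real" assume "f \<in> Fclass m B"
        then have "\<bar>logint f\<bar> \<le> B" by (rule logint_bound)
        then show "\<bar>logint f - 0\<bar> \<le> cdet m CARD('d) * B * real n powr (- (real m / real CARD('d)))"
          using bB by (simp add: d_def)
      qed
    qed
  qed
qed


lemma coord_lip:
  fixes f :: "real^'d \<Rightarrow> real"
  assumes C: "Cm_family m f D" and m: "m \<ge> 1"
    and bd: "\<forall>x\<in>cube. \<bar>D [k] x\<bar> \<le> B"
    and x: "x \<in> cube" and st: "s \<in> {0..1}" "t \<in> {0..1}"
  shows "\<bar>f (vupd x k s) - f (vupd x k t)\<bar> \<le> B * \<bar>s - t\<bar>"
proof -
  have d: "\<forall>u\<in>{0..1}. ((\<lambda>u. D [] (vupd x k u)) has_real_derivative D [k] (vupd x k u)) (at u within {0..1})"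
    using line_deriv[OF C, of "[]" x] m x by auto
  have b: "\<forall>u\<in>{0..1}. \<bar>D [k] (vupd x k u)\<bar> \<le> B" using bd x vupd_cube by blast
  have "\<bar>D [] (vupd x k s) - D [] (vupd x k t)\<bar> \<le> B * \<bar>s - t\<bar>"
    by (rule mvt_bound[OF d b st])
  moreover have "D [] (vupd x k s) = f (vupd x k s)" "D [] (vupd x k t) = f (vupd x k t)"
    using C x st vupd_cube unfolding Cm_family_def by blast+
  ultimately show ?thesis by simp
qed

lemma lip:
  fixes f :: "real^'d \<Rightarrow> real"
  assumes f: "f \<in> Fclass m B" and m: "m \<ge> 1" and x: "x \<in> cube" and y: "y \<in> cube"
  shows "\<bar>f x - f y\<bar> \<le> B * (\<Sum>j\<in>UNIV. \<bar>x$j - y$j\<bar>)"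
proof -
  obtain D where C: "Cm_family m f D" and bd: "\<forall>is. length is \<le> m \<longrightarrow> (\<forall>x\<in>cube. \<bar>D is x\<bar> \<le> B)"
    by (rule Fclass_D[OF f])
  have bd1: "\<forall>x\<in>cube. \<bar>D [k] x\<bar> \<le> B" for k using bd m by auto
  define z where "z = (\<lambda>S. (\<chi> j. if j \<in> S then x$j else y$j) :: real^'d)"
  have zc: "z S \<in> cube" for S using x y by (auto simp: z_def mem_cube)
  have "finite S \<Longrightarrow> \<bar>f (z S) - f y\<bar> \<le> B * (\<Sum>j\<in>S. \<bar>x$j - y$j\<bar>)" for S
  proof (induction S rule: finite_induct)
    case empty
    have "z {} = y" by (simp add: z_def vec_eq_iff)
    then show ?case by simp
  next
    case (insert k S)
    have e1: "z (insert k S) = vupd (z S) k (x$k)" by (simp add: z_def vec_eq_iff)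
    have e2: "z S = vupd (z S) k (y$k)" using insert.hyps by (simp add: z_def vec_eq_iff)
    have xk: "x$k \<in> {0..1}" "y$k \<in> {0..1}" using x y by (auto simp: mem_cube)
    have "\<bar>f (vupd (z S) k (x$k)) - f (vupd (z S) k (y$k))\<bar> \<le> B * \<bar>x$k - y$k\<bar>"
      by (rule coord_lip[OF C m bd1 zc xk])
    then have "\<bar>f (z (insert k S)) - f (z S)\<bar> \<le> B * \<bar>x$k - y$k\<bar>" using e1 e2 by metis
    then show ?case using insert by (simp add: algebra_simps)
  qed
  from this[of UNIV] show ?thesis by (simp add: z_def)
qed

definition Tf :: "nat \<Rightarrow> real set" where
  "Tf F = {real c / real F | c. c < F}"

definition FG :: "nat \<Rightarrow> (real^'d) set" where
  "FG F = {y. \<forall>j. y$j \<in> Tf F}"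

definition cell :: "nat \<Rightarrow> real^'d \<Rightarrow> (real^'d) set" where
  "cell F y = cbox y (y + (1 / real F) *\<^sub>R 1)"

lemma Tf_finite: "finite (Tf F)"
proof -
  have "Tf F = (\<lambda>c. real c / real F) ` {..<F}" by (auto simp: Tf_def)
  then show ?thesis by simp
qed

lemma FG_finite: "finite (FG F :: (real^'d) set)"
  unfolding FG_def by (intro grid_finite Tf_finite)

lemma FG_cube: "y \<in> FG F \<Longrightarrow> y \<in> cube"
  unfolding mem_cube
proof
  fix j assume "y \<in> FG F"
  then obtain c where c: "c < F" "y$j = real c / real F" by (auto simp: FG_def Tf_def)
  then have "real c \<le> real F" by simp
  then show "0 \<le> y$j \<and> y$j \<le> 1" using c by (auto simp: divide_le_eq_1)
qed

lemma mem_cell: "x \<in> cell F y \<longleftrightarrow> (\<forall>j. y$j \<le> x$j \<and> x$j \<le> y$j + 1 / real F)"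
  by (simp add: cell_def mem_box_cart)

lemma cell_sub:
  assumes "F \<ge> 1" "y \<in> FG F"
  shows "cell F y \<subseteq> cube"
proof
  fix x assume x: "x \<in> cell F y"
  show "x \<in> cube" unfolding mem_cube
  proof
    fix j
    obtain c where c: "c < F" "y$j = real c / real F" using assms(2) by (auto simp: FG_def Tf_def)
    have "y$j + 1 / real F = (real c + 1) / real F" using c by (simp add: add_divide_distrib)
    also have "\<dots> \<le> 1" using c assms(1) by (simp add: divide_le_eq_1)
    moreover have "y$j \<le> x$j" "x$j \<le> y$j + 1 / real F" using x by (auto simp: mem_cell)
    moreover have "0 \<le> real c / real F" by simp
    ultimately show "0 \<le> x$j \<and> x$j \<le> 1" using c by linarith
  qed
qed

lemma cell_interior_disj:
  assumes "F \<ge> 1" "y \<in> FG F" "y' \<in> FG F" "y \<noteq> y'"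
  shows "interior (cell F y) \<inter> interior (cell F y') = {}"
proof -
  obtain j where j: "y$j \<noteq> y'$j" using assms(4) by (auto simp: vec_eq_iff)
  obtain c where c: "c < F" "y$j = real c / real F" using assms(2) by (auto simp: FG_def Tf_def)
  obtain c' where c': "c' < F" "y'$j = real c' / real F" using assms(3) by (auto simp: FG_def Tf_def)
  have Fp: "real F > 0" using assms(1) by simp
  have sep: "y$j + 1 / real F \<le> y'$j \<or> y'$j + 1 / real F \<le> y$j"
  proof (cases "c < c'")
    case True
    then have "real c + 1 \<le> real c'" by simp
    then have "(real c + 1) / real F \<le> real c' / real F" using Fp by (simp add: divide_right_mono)
    then show ?thesis using c c' by (simp add: add_divide_distrib)
  next
    case False
    then have "c' < c" using j c c' by (metis linorder_neqE_nat)
    then have "real c' + 1 \<le> real c" by simp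
    then have "(real c' + 1) / real F \<le> real c / real F" using Fp by (simp add: divide_right_mono)
    then show ?thesis using c c' by (simp add: add_divide_distrib)
  qed
  show ?thesis
  proof (rule ccontr)
    assume "interior (cell F y) \<inter> interior (cell F y') \<noteq> {}"
    then obtain x where "x \<in> box y (y + (1 / real F) *\<^sub>R 1)" "x \<in> box y' (y' + (1 / real F) *\<^sub>R 1)"
      by (auto simp: cell_def interior_cbox)
    then have "y$j < x$j" "x$j < y$j + 1 / real F" "y'$j < x$j" "x$j < y'$j + 1 / real F"
      by (auto simp: mem_box_cart)
    then show False using sep by linarith
  qed
qed

lemma cell_interior_ne:
  assumes "F \<ge> 1"
  shows "interior (cell F y) \<noteq> {}"
proof -
  have Fp: "real F > 0" using assms by simp
  have "y + (1 / (2 * real F)) *\<^sub>R 1 \<in> box y (y + (1 / real F) *\<^sub>R 1)"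
    using Fp by (auto simp: mem_box_cart field_simps)
  then show ?thesis by (auto simp: cell_def interior_cbox)
qed

lemma cell_inj:
  assumes "F \<ge> 1"
  shows "inj_on (cell F) (FG F :: (real^'d) set)"
proof (rule inj_onI, rule ccontr)
  fix y y' :: "real^'d" assume "y \<in> FG F" "y' \<in> FG F" "cell F y = cell F y'" "y \<noteq> y'"
  then have "interior (cell F y) = {}" using cell_interior_disj[OF assms] by force
  then show False using cell_interior_ne[OF assms] by blast
qed

lemma cube_cover:
  fixes x :: "real^'d"
  assumes "F \<ge> 1" "x \<in> cube"
  shows "\<exists>y\<in>FG F. x \<in> cell F y"
proof -
  have "\<forall>j. \<exists>c::nat. c < F \<and> real c \<le> real F * x$j \<and> real F * x$j \<le> real c + 1"
    using cell_exists[OF assms(1)] assms(2) by (auto simp: mem_cube)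
  then obtain c :: "'d \<Rightarrow> nat" where c: "\<And>j. c j < F \<and> real (c j) \<le> real F * x$j \<and> real F * x$j \<le> real (c j) + 1"
    by metis
  define y :: "real^'d" where "y = (\<chi> j. real (c j) / real F)"
  have Fp: "real F > 0" using assms by simp
  have "y \<in> FG F" using c by (auto simp: y_def FG_def Tf_def)
  moreover have "x \<in> cell F y" unfolding mem_cell
  proof
    fix j
    have "real (c j) / real F \<le> x$j" using c[of j] Fp by (simp add: field_simps)
    moreover have "x$j \<le> real (c j) / real F + 1 / real F" using c[of j] Fp by (simp add: field_simps)
    ultimately show "y$j \<le> x$j \<and> x$j \<le> y$j + 1 / real F" by (simp add: y_def)
  qed
  ultimately show ?thesis by blast
qed

lemma cells_division:
  assumes "F \<ge> 1"
  shows "(cell F ` (FG F :: (real^'d) set)) division_of cube"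
proof (rule division_ofI)
  show "finite (cell F ` FG F)" by (intro finite_imageI FG_finite)
  show "K \<subseteq> cube" if "K \<in> cell F ` FG F" for K :: "(real^'d) set" using that cell_sub[OF assms] by auto
  show "K \<noteq> {}" if "K \<in> cell F ` FG F" for K :: "(real^'d) set" using that cell_interior_ne[OF assms] interior_subset by fastforce
  show "\<exists>a b. K = cbox a b" if "K \<in> cell F ` FG F" for K :: "(real^'d) set" using that by (auto simp: cell_def)
  show "interior K1 \<inter> interior K2 = {}" if "K1 \<in> cell F ` FG F" "K2 \<in> cell F ` FG F" "K1 \<noteq> K2" for K1 K2 :: "(real^'d) set"
    using that cell_interior_disj[OF assms] by auto
  show "\<Union> (cell F ` FG F) = cube" using cell_sub[OF assms] cube_cover[OF assms] by blast
qed

lemma cell_content: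
  assumes "F \<ge> 1"
  shows "Henstock_Kurzweil_Integration.content (cell F (y::real^'d)) = (1 / real F) ^ CARD('d)"
proof -
  have "cell F y \<noteq> {}" using cell_interior_ne[OF assms] interior_subset by blast
  then show ?thesis by (simp add: cell_def content_cbox_cart)
qed


lemma Fclass_B_nonneg: "f \<in> Fclass m B \<Longrightarrow> B \<ge> 0"
proof -
  assume f: "f \<in> Fclass m B"
  have "(0::real^'d) \<in> cube" by (simp add: mem_cube)
  from Fclass_bound[OF f this] show "B \<ge> 0" by linarith
qed

lemma FG_ne: "(0::real^'d) \<in> FG F \<or> F = 0"
  by (cases F) (auto simp: FG_def Tf_def)

lemma riemann:
  fixes f :: "real^'d \<Rightarrow> real"
  assumes f: "f \<in> Fclass m B" and m: "m \<ge> 1" and F: "F \<ge> 1"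
  shows "\<bar>ln (\<Sum>y\<in>FG F. (1 / real F)^CARD('d) * exp (f y)) - logint f\<bar> \<le> B * real CARD('d) / real F"
proof -
  define \<tau> where "\<tau> = B * real CARD('d) / real F"
  define R where "R = (\<Sum>y\<in>(FG F :: (real^'d) set). (1 / real F)^CARD('d) * exp (f y))"
  define g where "g = (\<lambda>x. exp (f x))"
  have B0: "B \<ge> 0" using Fclass_B_nonneg[OF f] .
  have Fp: "real F > 0" using F by simp
  have cont: "continuous_on cube f" using Fclass_cont[OF f] .
  have fb: "\<forall>x\<in>cube. \<bar>f x\<bar> \<le> B" using Fclass_bound[OF f] by blast
  have gint: "g integrable_on cube" unfolding g_def by (rule exp_integral_pos(2)[OF cont fb])
  have I: "integral cube g = (\<Sum>y\<in>(FG F :: (real^'d) set). integral (cell F y) g)"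
  proof -
    have "integral cube g = (\<Sum>K\<in>cell F ` (FG F :: (real^'d) set). integral K g)"
      by (rule integral_combine_division_topdown[OF gint cells_division[OF F]])
    also have "\<dots> = (\<Sum>y\<in>(FG F :: (real^'d) set). integral (cell F y) g)"
      by (rule sum.reindex[OF cell_inj[OF F], unfolded comp_def])
    finally show ?thesis .
  qed
  have close: "\<bar>f x - f y\<bar> \<le> \<tau>" if y: "y \<in> FG F" and x: "x \<in> cell F y" for x y :: "real^'d"
  proof -
    have yc: "y \<in> cube" using FG_cube[OF y] .
    have xc: "x \<in> cube" using cell_sub[OF F y] x by blast
    have "\<bar>f x - f y\<bar> \<le> B * (\<Sum>j\<in>UNIV. \<bar>x$j - y$j\<bar>)" by (rule lip[OF f m xc yc])
    also have "\<dots> \<le> B * (\<Sum>j\<in>(UNIV::'d set). 1 / real F)"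
    proof (intro mult_left_mono sum_mono)
      fix j
      have "y$j \<le> x$j" "x$j \<le> y$j + 1 / real F" using x by (auto simp: mem_cell)
      then show "\<bar>x$j - y$j\<bar> \<le> 1 / real F" by linarith
    qed (use B0 in auto)
    also have "\<dots> = \<tau>" by (simp add: \<tau>_def)
    finally show ?thesis .
  qed
  have cellint: "g integrable_on cell F y" if y: "y \<in> FG F" for y :: "real^'d"
    using integrable_on_subcbox[OF gint[unfolded cube_def]] cell_sub[OF F y]
    unfolding cell_def cube_def by blast
  have upper: "integral (cell F y) g \<le> exp \<tau> * ((1 / real F)^CARD('d) * exp (f y))"
    if y: "y \<in> FG F" for y :: "real^'d"
  proof -
    have "integral (cell F y) g \<le> integral (cell F y) (\<lambda>x::real^'d. exp (f y + \<tau>))"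
    proof (rule Henstock_Kurzweil_Integration.integral_le[OF cellint[OF y]])
      show "(\<lambda>x::real^'d. exp (f y + \<tau>)) integrable_on cell F y" unfolding cell_def by (rule integrable_const)
      show "g x \<le> exp (f y + \<tau>)" if "x \<in> cell F y" for x
        using close[OF y that] by (simp add: g_def)
    qed
    also have "\<dots> = (1 / real F)^CARD('d) * exp (f y + \<tau>)"
      using cell_content[OF F, of y] by (simp add: cell_def integral_const)
    finally show ?thesis by (simp add: exp_add mult_ac)
  qed
  have lower: "exp (-\<tau>) * ((1 / real F)^CARD('d) * exp (f y)) \<le> integral (cell F y) g"
    if y: "y \<in> FG F" for y :: "real^'d"
  proof -
    have "integral (cell F y) (\<lambda>x::real^'d. exp (f y - \<tau>)) \<le> integral (cell F y) g"
    proof (rule Henstock_Kurzweil_Integration.integral_le[OF _ cellint[OF y]])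
      show "(\<lambda>x::real^'d. exp (f y - \<tau>)) integrable_on cell F y" unfolding cell_def by (rule integrable_const)
      show "exp (f y - \<tau>) \<le> g x" if "x \<in> cell F y" for x
        using close[OF y that] by (simp add: g_def)
    qed
    moreover have "integral (cell F y) (\<lambda>x::real^'d. exp (f y - \<tau>)) = (1 / real F)^CARD('d) * exp (f y - \<tau>)"
      using cell_content[OF F, of y] by (simp add: cell_def integral_const)
    moreover have "exp (f y - \<tau>) = exp (-\<tau>) * exp (f y)" by (subst exp_add[symmetric]) simp
    ultimately show ?thesis by (simp add: mult_ac)
  qed
  have up: "integral cube g \<le> exp \<tau> * R"
    unfolding I R_def sum_distrib_left by (rule sum_mono[OF upper])
  have lo: "exp (-\<tau>) * R \<le> integral cube g"
    unfolding I R_def sum_distrib_left by (rule sum_mono[OF lower])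
  have Rpos: "R > 0"
  proof -
    have "(0::real^'d) \<in> FG F" using FG_ne[where 'd='d, of F] F by auto
    then show ?thesis unfolding R_def using FG_finite[where 'd='d, of F] Fp
      by (intro sum_pos2[of _ 0]) auto
  qed
  have Ipos: "integral cube g > 0" using lo Rpos by (meson exp_gt_zero mult_pos_pos less_le_trans)
  have "logint f \<le> ln (exp \<tau> * R)" unfolding logint_def g_def[symmetric] using up Ipos by simp
  also have "\<dots> = \<tau> + ln R" using Rpos by (simp add: ln_mult)
  finally have a: "logint f \<le> \<tau> + ln R" .
  have "ln (exp (-\<tau>) * R) \<le> logint f" unfolding logint_def g_def[symmetric]
    using lo Rpos by (intro ln_mono) auto
  moreover have "ln (exp (-\<tau>) * R) = -\<tau> + ln R" using Rpos by (simp add: ln_mult)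
  ultimately have b: "ln R - \<tau> \<le> logint f" by simp
  show ?thesis using a b by (simp add: R_def \<tau>_def abs_le_iff)
qed


definition Om :: "real set \<Rightarrow> nat \<Rightarrow> (nat \<Rightarrow> real) set" where
  "Om U k = {w. (\<forall>i<k. w i \<in> U) \<and> (\<forall>i. k \<le> i \<longrightarrow> w i = 0)}"

lemma Om_0: "Om U 0 = {\<lambda>_. 0}"
  by (auto simp: Om_def)

lemma Om_Suc: "Om U (Suc k) = (\<lambda>(w,x). w(k:=x)) ` (Om U k \<times> U)"
proof (intro equalityI subsetI)
  fix w assume w: "w \<in> Om U (Suc k)"
  then have "w(k:=0) \<in> Om U k" "w k \<in> U" by (auto simp: Om_def)
  moreover have "w = (\<lambda>(w,x). w(k:=x)) (w(k:=0), w k)" by simp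
  ultimately show "w \<in> (\<lambda>(w,x). w(k:=x)) ` (Om U k \<times> U)" by (intro image_eqI) auto
next
  fix w assume "w \<in> (\<lambda>(w,x). w(k:=x)) ` (Om U k \<times> U)"
  then obtain w0 x where "w0 \<in> Om U k" "x \<in> U" "w = w0(k:=x)" by auto
  then show "w \<in> Om U (Suc k)" by (auto simp: Om_def less_Suc_eq)
qed

lemma Om_inj: "inj_on (\<lambda>(w,x). w(k:=x)) (Om U k \<times> U)"
proof (rule inj_onI, clarsimp)
  fix w x w' x'
  assume a: "w \<in> Om U k" "w' \<in> Om U k" "w(k := x) = w'(k := x')"
  then have "x = x'" by (metis fun_upd_same)
  moreover have "w = w'"
  proof
    fix i show "w i = w' i"
    proof (cases "i = k")
      case True then show ?thesis using a(1,2) by (simp add: Om_def)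
    next
      case False then show ?thesis using a(3) by (metis fun_upd_other)
    qed
  qed
  ultimately show "w = w' \<and> x = x'" by simp
qed

lemma Om_finite: "finite U \<Longrightarrow> finite (Om U k)"
  by (induction k) (auto simp: Om_0 Om_Suc)

lemma Om_card: "finite U \<Longrightarrow> card (Om U k) = card U ^ k"
proof (induction k)
  case 0 then show ?case by (simp add: Om_0)
next
  case (Suc k)
  have "card (Om U (Suc k)) = card (Om U k \<times> U)"
    unfolding Om_Suc by (rule card_image[OF Om_inj])
  then show ?case using Suc by (simp add: card_cartesian_product)
qed

lemma Om_ne: "U \<noteq> {} \<Longrightarrow> Om U k \<noteq> {}"
  by (induction k) (auto simp: Om_0 Om_Suc)

lemma Om_sum_Suc:
  assumes "finite U"
  shows "(\<Sum>w\<in>Om U (Suc k). G w) = (\<Sum>w\<in>Om U k. \<Sum>x\<in>U. G (w(k:=x)))"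
proof -
  have "(\<Sum>w\<in>Om U (Suc k). G w) = (\<Sum>p\<in>Om U k \<times> U. G ((\<lambda>(w,x). w(k:=x)) p))"
    unfolding Om_Suc by (rule sum.reindex[OF Om_inj, unfolded comp_def])
  also have "\<dots> = (\<Sum>w\<in>Om U k. \<Sum>x\<in>U. G (w(k:=x)))"
    by (subst sum.cartesian_product) (simp add: case_prod_beta)
  finally show ?thesis .
qed

lemma var_sum:
  assumes U: "finite U" "U \<noteq> {}" and X0: "(\<Sum>x\<in>U. X x) = 0"
  shows "(\<Sum>w\<in>Om U k. (\<Sum>i<k. X (w i))^2) = real k * real (card U)^k * ((\<Sum>x\<in>U. (X x)^2) / card U)"
proof (induction k)
  case 0 then show ?case by (simp add: Om_0)
next
  case (Suc k)
  define V where "V = (\<Sum>x\<in>U. (X x)^2)"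
  have cU: "real (card U) > 0" using U by (simp add: card_gt_0_iff)
  have inner: "(\<Sum>x\<in>U. (\<Sum>i<Suc k. X ((w(k:=x)) i))^2) = real (card U) * (\<Sum>i<k. X (w i))^2 + V" for w
  proof -
    have e: "(\<Sum>i<Suc k. X ((w(k:=x)) i)) = (\<Sum>i<k. X (w i)) + X x" for x
      by (simp add: sum.lessThan_Suc)
    have "(\<Sum>x\<in>U. (\<Sum>i<Suc k. X ((w(k:=x)) i))^2)
        = (\<Sum>x\<in>U. (\<Sum>i<k. X (w i))^2 + 2 * (\<Sum>i<k. X (w i)) * X x + (X x)^2)"
      by (simp add: e power2_sum algebra_simps)
    also have "\<dots> = real (card U) * (\<Sum>i<k. X (w i))^2 + 2 * (\<Sum>i<k. X (w i)) * (\<Sum>x\<in>U. X x) + V"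
      by (simp add: sum.distrib sum_distrib_left V_def)
    finally show ?thesis using X0 by simp
  qed
  have "(\<Sum>w\<in>Om U (Suc k). (\<Sum>i<Suc k. X (w i))^2)
      = (\<Sum>w\<in>Om U k. real (card U) * (\<Sum>i<k. X (w i))^2 + V)"
    by (subst Om_sum_Suc[OF U(1)]) (simp only: inner)
  also have "\<dots> = real (card U) * (real k * real (card U)^k * (V / card U)) + real (card U)^k * V"
    using Suc.IH by (simp add: sum.distrib sum_distrib_left[symmetric] Om_card[OF U(1)] V_def)
  also have "\<dots> = real (Suc k) * real (card U)^Suc k * (V / card U)"
    using cU by (simp add: field_simps)
  finally show ?case by (simp add: V_def)
qed

lemma aux_sq:
  fixes S c Q :: real
  assumes "c > 0" "S^2 \<le> c * Q * c"
  shows "(S / c)^2 \<le> Q"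
proof -
  have "S^2 / c^2 \<le> (c * Q * c) / c^2" using assms by (intro divide_right_mono) auto
  also have "\<dots> = Q" using assms(1) by (simp add: power2_eq_square)
  finally show ?thesis by (simp add: power_divide)
qed

lemma aux_eq:
  fixes k u R :: real and n :: nat
  assumes "k > 0" "u > 0"
  shows "k * u^n * (u * R^2 / u) / k^2 = u^n * R^2 / k"
  using assms by (simp add: power2_eq_square)

lemma mc_bound:
  assumes U: "finite U" "U \<noteq> {}" and k: "k \<ge> 1"
    and R: "\<forall>x\<in>U. \<bar>Y x - (\<Sum>u\<in>U. Y u) / card U\<bar> \<le> R"
  shows "(\<Sum>w\<in>Om U k. \<bar>(\<Sum>i<k. Y (w i)) / k - (\<Sum>u\<in>U. Y u) / card U\<bar>) / card (Om U k) \<le> R / sqrt k"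
proof -
  define \<mu> where "\<mu> = (\<Sum>u\<in>U. Y u) / card U"
  define X where "X = (\<lambda>x. Y x - \<mu>)"
  define \<Omega> where "\<Omega> = Om U k"
  have cU: "real (card U) > 0" using U by (simp add: card_gt_0_iff)
  have kp: "real k > 0" using k by simp
  have X0: "(\<Sum>x\<in>U. X x) = 0" using cU by (simp add: X_def sum_subtractf \<mu>_def)
  have finO: "finite \<Omega>" "\<Omega> \<noteq> {}" using Om_finite[OF U(1)] Om_ne[OF U(2)] by (auto simp: \<Omega>_def)
  have cO: "real (card \<Omega>) = real (card U)^k" by (simp add: \<Omega>_def Om_card[OF U(1)])
  have cOp: "real (card \<Omega>) > 0" using finO by (simp add: card_gt_0_iff)
  have R0: "R \<ge> 0" using R U(2) by (metis abs_ge_zero all_not_in_conv order_trans)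
  define a where "a = (\<lambda>w. (\<Sum>i<k. X (w i)) / k)"
  have ea: "(\<Sum>i<k. Y (w i)) / k - \<mu> = a w" for w
    using kp by (simp add: a_def X_def sum_subtractf field_simps)
  have V: "(\<Sum>x\<in>U. (X x)^2) \<le> real (card U) * R^2"
  proof -
    have "(\<Sum>x\<in>U. (X x)^2) \<le> (\<Sum>x\<in>U. R^2)"
    proof (rule sum_mono)
      fix x assume "x \<in> U"
      then have "\<bar>X x\<bar> \<le> R" using R by (simp add: X_def \<mu>_def)
      then show "(X x)^2 \<le> R^2" by (metis abs_ge_zero power2_abs power_mono)
    qed
    then show ?thesis by simp
  qed
  have sq: "(\<Sum>w\<in>\<Omega>. (a w)^2) \<le> real (card \<Omega>) * R^2 / real k"
  proof -
    have "(\<Sum>w\<in>\<Omega>. (a w)^2) = (\<Sum>w\<in>\<Omega>. (\<Sum>i<k. X (w i))^2) / (real k)^2"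
      unfolding a_def power_divide by (rule sum_divide_distrib[symmetric])
    also have "\<dots> = real k * real (card U)^k * ((\<Sum>x\<in>U. (X x)^2) / card U) / (real k)^2"
      unfolding \<Omega>_def by (simp add: var_sum[OF U X0])
    also have "\<dots> \<le> real k * real (card U)^k * (real (card U) * R^2 / card U) / (real k)^2"
      using V cU kp by (intro divide_right_mono mult_left_mono) auto
    also have "\<dots> = real (card \<Omega>) * R^2 / real k"
      unfolding cO by (rule aux_eq[OF kp cU])
    finally show ?thesis .
  qed
  have "(\<Sum>w\<in>\<Omega>. \<bar>a w\<bar>)^2 \<le> (\<Sum>w\<in>\<Omega>. (\<bar>a w\<bar>)^2) * card \<Omega>"
    by (rule sum_squared_le_sum_of_squares)
  also have "\<dots> \<le> real (card \<Omega>) * R^2 / real k * card \<Omega>"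
    using sq cOp by (intro mult_right_mono) auto
  finally have "((\<Sum>w\<in>\<Omega>. \<bar>a w\<bar>) / card \<Omega>)^2 \<le> R^2 / real k"
    by (intro aux_sq[OF cOp]) (simp add: mult_ac)
  also have "\<dots> = (R / sqrt k)^2" using kp by (simp add: power_divide)
  finally have "(\<Sum>w\<in>\<Omega>. \<bar>a w\<bar>) / card \<Omega> \<le> R / sqrt k"
    by (rule power2_le_imp_le) (use R0 in simp)
  moreover have "(\<Sum>w\<in>\<Omega>. \<bar>(\<Sum>i<k. Y (w i)) / k - \<mu>\<bar>) = (\<Sum>w\<in>\<Omega>. \<bar>a w\<bar>)"
    using ea by simp
  ultimately show ?thesis unfolding \<Omega>_def \<mu>_def[symmetric] by simp
qed


definition cum :: "(nat \<Rightarrow> real) \<Rightarrow> nat \<Rightarrow> real" where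
  "cum a i = (\<Sum>j<i. a j)"

definition sel :: "nat \<Rightarrow> (nat \<Rightarrow> real) \<Rightarrow> real \<Rightarrow> nat" where
  "sel N a v = card {i \<in> {1..<N}. cum a i \<le> v}"

lemma sel_lt: "N \<ge> 1 \<Longrightarrow> sel N a v < N"
proof -
  assume N: "N \<ge> 1"
  have "sel N a v \<le> card {1..<N}" unfolding sel_def by (rule card_mono) auto
  then show ?thesis using N by simp
qed

lemma cum_mono:
  assumes "\<forall>j<N. a j \<ge> 0" "i \<le> i'" "i' \<le> N"
  shows "cum a i \<le> cum a i'"
  unfolding cum_def by (rule sum_mono2) (use assms in auto)

lemma cum_Suc: "cum a (Suc i) = cum a i + a i"
  by (simp add: cum_def)

lemma sel_char:
  assumes a: "\<forall>j<N. a j \<ge> 0" and i: "i < N" and v: "cum a i \<le> v" "v < cum a (Suc i)"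
  shows "sel N a v = i"
proof -
  have "{i' \<in> {1..<N}. cum a i' \<le> v} = {1..i}"
  proof (intro equalityI subsetI)
    fix i' assume "i' \<in> {i' \<in> {1..<N}. cum a i' \<le> v}"
    then have i': "1 \<le> i'" "i' < N" "cum a i' \<le> v" by auto
    have "i' \<le> i"
    proof (rule ccontr)
      assume "\<not> i' \<le> i"
      then have "cum a (Suc i) \<le> cum a i'" using a i' by (intro cum_mono) auto
      then show False using i' v by linarith
    qed
    then show "i' \<in> {1..i}" using i' by auto
  next
    fix i' assume "i' \<in> {1..i}"
    then have "1 \<le> i'" "i' \<le> i" by auto
    moreover have "cum a i' \<le> cum a i" using a i \<open>i' \<le> i\<close> by (intro cum_mono) auto
    ultimately show "i' \<in> {i' \<in> {1..<N}. cum a i' \<le> v}" using i v by auto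
  qed
  then show ?thesis by (simp add: sel_def)
qed

lemma sel_iff:
  assumes a: "\<forall>j<N. a j \<ge> 0" and v: "0 \<le> v" "v < cum a N" and i: "i < N"
  shows "sel N a v = i \<longleftrightarrow> cum a i \<le> v \<and> v < cum a (Suc i)"
proof
  assume "cum a i \<le> v \<and> v < cum a (Suc i)"
  then show "sel N a v = i" using sel_char[OF a i] by blast
next
  assume s: "sel N a v = i"
  define I where "I = {i. i < N \<and> cum a i \<le> v}"
  have I0: "0 \<in> I" using i v by (simp add: I_def cum_def)
  have If: "finite I" by (simp add: I_def)
  define i0 where "i0 = Max I"
  have i0I: "i0 \<in> I" unfolding i0_def using If I0 by (intro Max_in) auto
  then have i0: "i0 < N" "cum a i0 \<le> v" by (auto simp: I_def)
  have "v < cum a (Suc i0)"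
  proof (cases "Suc i0 < N")
    case True
    have "Suc i0 \<notin> I" using Max_ge[OF If, of "Suc i0"] by (auto simp: i0_def)
    then show ?thesis using True by (auto simp: I_def)
  next
    case False
    then have "Suc i0 = N" using i0 by simp
    then show ?thesis using v by simp
  qed
  then have "sel N a v = i0" using sel_char[OF a i0(1) i0(2)] by blast
  then have "i = i0" using s by simp
  then show "cum a i \<le> v \<and> v < cum a (Suc i)" using i0 \<open>v < cum a (Suc i0)\<close> by simp
qed

lemma nat_ceil_le: "0 \<le> x \<Longrightarrow> real u < x \<longleftrightarrow> u < nat \<lceil>x\<rceil>"
  by linarith

lemma count_int:
  fixes \<alpha> \<beta> :: real
  assumes "0 \<le> \<alpha>" "\<alpha> \<le> \<beta>"
  shows "\<bar>real (card {u::nat. \<alpha> \<le> real u + 1/2 \<and> real u + 1/2 < \<beta>}) - (\<beta> - \<alpha>)\<bar> \<le> 1"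
proof -
  define p where "p = nat \<lceil>\<alpha> - 1/2\<rceil>"
  define q where "q = nat \<lceil>\<beta> - 1/2\<rceil>"
  have set: "{u::nat. \<alpha> \<le> real u + 1/2 \<and> real u + 1/2 < \<beta>} = {p..<q}"
  proof (intro equalityI subsetI)
    fix u assume "u \<in> {u::nat. \<alpha> \<le> real u + 1/2 \<and> real u + 1/2 < \<beta>}"
    then have u: "\<alpha> - 1/2 \<le> real u" "real u < \<beta> - 1/2" by auto
    have "p \<le> u" unfolding p_def using u(1) by linarith
    moreover have "u < q" unfolding q_def using u(2) by linarith
    ultimately show "u \<in> {p..<q}" by simp
  next
    fix u assume "u \<in> {p..<q}"
    then have "p \<le> u" "u < q" by auto
    then have "\<alpha> - 1/2 \<le> real u" "real u < \<beta> - 1/2" unfolding p_def q_def using assms by linarith+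
    then show "u \<in> {u::nat. \<alpha> \<le> real u + 1/2 \<and> real u + 1/2 < \<beta>}" by auto
  qed
  have pr: "real p = of_int \<lceil>\<alpha> - 1/2\<rceil>" using assms unfolding p_def by linarith
  have qr: "real q = of_int \<lceil>\<beta> - 1/2\<rceil>" using assms unfolding q_def by linarith
  have pq: "p \<le> q" unfolding p_def q_def using assms by (intro nat_mono ceiling_mono) auto
  have "real (card {p..<q}) = real q - real p" using pq by (simp add: of_nat_diff)
  moreover have "\<alpha> - 1/2 \<le> of_int \<lceil>\<alpha> - 1/2\<rceil>" "of_int \<lceil>\<alpha> - 1/2\<rceil> < \<alpha> - 1/2 + 1"
    "\<beta> - 1/2 \<le> of_int \<lceil>\<beta> - 1/2\<rceil>" "of_int \<lceil>\<beta> - 1/2\<rceil> < \<beta> - 1/2 + 1" by linarith+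
  ultimately show ?thesis unfolding set using pr qr by linarith
qed

lemma cum_pos: "N \<ge> 1 \<Longrightarrow> \<forall>j<N. a j > 0 \<Longrightarrow> cum a N > 0"
proof -
  assume N: "N \<ge> 1" and a: "\<forall>j<N. a j > 0"
  have "0 \<in> {..<N}" using N by simp
  then show ?thesis unfolding cum_def by (intro sum_pos) (use a in auto)
qed

lemma sample_bias:
  assumes N: "N \<ge> 1" and NU: "NU \<ge> 1" and a: "\<forall>j<N. a j > 0" and w: "\<forall>j<N. \<bar>w j\<bar> \<le> Wm"
  shows "\<bar>(\<Sum>u<NU. w (sel N a ((real u + 1/2) * cum a N / NU))) / NU - (\<Sum>j<N. a j * w j) / cum a N\<bar>
    \<le> real N * Wm / NU"
proof -
  define A where "A = cum a N"
  have Ap: "A > 0" unfolding A_def by (rule cum_pos[OF N a])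
  have NUp: "real NU > 0" using NU by simp
  have a0: "\<forall>j<N. a j \<ge> 0" using a by auto
  define idx where "idx = (\<lambda>u::nat. sel N a ((real u + 1/2) * A / NU))"
  define cnt where "cnt = (\<lambda>i. card {u \<in> {..<NU}. idx u = i})"
  have idx_lt: "idx u < N" for u unfolding idx_def by (rule sel_lt[OF N])
  have grp: "(\<Sum>u<NU. w (idx u)) = (\<Sum>i<N. real (cnt i) * w i)"
  proof -
    have "(\<Sum>u<NU. w (idx u)) = (\<Sum>i<N. \<Sum>u\<in>{u \<in> {..<NU}. idx u = i}. w (idx u))"
      by (rule sum.group[symmetric]) (use idx_lt in auto)
    also have "\<dots> = (\<Sum>i<N. \<Sum>u\<in>{u \<in> {..<NU}. idx u = i}. w i)"
      by (intro sum.cong refl) auto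
    also have "\<dots> = (\<Sum>i<N. real (cnt i) * w i)" by (simp add: cnt_def)
    finally show ?thesis .
  qed
  have cnt_close: "\<bar>real (cnt i) - a i * NU / A\<bar> \<le> 1" if i: "i < N" for i
  proof -
    define \<alpha> where "\<alpha> = cum a i * NU / A"
    define \<beta> where "\<beta> = cum a (Suc i) * NU / A"
    have ci: "0 \<le> cum a i" using cum_mono[OF a0, of 0 i] i by (simp add: cum_def)
    have cS: "cum a (Suc i) \<le> A" unfolding A_def using i by (intro cum_mono[OF a0]) auto
    have ab: "0 \<le> \<alpha>" "\<alpha> \<le> \<beta>" "\<beta> \<le> NU"
    proof -
      show "0 \<le> \<alpha>" using ci Ap NUp by (simp add: \<alpha>_def)
      have "cum a i \<le> cum a (Suc i)" using a0 i by (simp add: cum_Suc)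
      then show "\<alpha> \<le> \<beta>" using Ap NUp by (simp add: \<alpha>_def \<beta>_def divide_right_mono)
      have "\<beta> \<le> A * NU / A" unfolding \<beta>_def using cS Ap NUp by (intro divide_right_mono mult_right_mono) auto
      then show "\<beta> \<le> NU" using Ap by simp
    qed
    have ba: "\<beta> - \<alpha> = a i * NU / A"
      unfolding \<alpha>_def \<beta>_def cum_Suc by (simp add: diff_divide_distrib[symmetric] algebra_simps)
    have eqs: "{u \<in> {..<NU}. idx u = i} = {u::nat. \<alpha> \<le> real u + 1/2 \<and> real u + 1/2 < \<beta>}"
    proof (intro equalityI subsetI)
      fix u assume "u \<in> {u \<in> {..<NU}. idx u = i}"
      then have u: "u < NU" "idx u = i" by auto
      define v where "v = (real u + 1/2) * A / NU"
      have v0: "0 \<le> v" using Ap NUp by (simp add: v_def)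
      have "real u + 1/2 < NU" using u(1) by linarith
      then have "v < NU * A / NU" unfolding v_def using Ap NUp by (intro divide_strict_right_mono mult_strict_right_mono) auto
      then have vA: "v < cum a N" using NUp by (simp add: A_def)
      have "cum a i \<le> v \<and> v < cum a (Suc i)" using sel_iff[OF a0 v0 vA i] u(2) by (simp add: idx_def v_def)
      then have "cum a i * NU / A \<le> real u + 1/2 \<and> real u + 1/2 < cum a (Suc i) * NU / A"
        using Ap NUp by (simp add: v_def field_simps)
      then show "u \<in> {u::nat. \<alpha> \<le> real u + 1/2 \<and> real u + 1/2 < \<beta>}" by (simp add: \<alpha>_def \<beta>_def)
    next
      fix u assume "u \<in> {u::nat. \<alpha> \<le> real u + 1/2 \<and> real u + 1/2 < \<beta>}"
      then have u: "\<alpha> \<le> real u + 1/2" "real u + 1/2 < \<beta>" by auto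
      have uN: "u < NU" using u(2) ab(3) by linarith
      define v where "v = (real u + 1/2) * A / NU"
      have v0: "0 \<le> v" using Ap NUp by (simp add: v_def)
      have "real u + 1/2 < NU" using uN by linarith
      then have "v < NU * A / NU" unfolding v_def using Ap NUp by (intro divide_strict_right_mono mult_strict_right_mono) auto
      then have vA: "v < cum a N" using NUp by (simp add: A_def)
      have "cum a i \<le> v \<and> v < cum a (Suc i)"
        using u Ap NUp by (simp add: v_def \<alpha>_def \<beta>_def field_simps)
      then have "idx u = i" using sel_iff[OF a0 v0 vA i] by (simp add: idx_def v_def)
      then show "u \<in> {u \<in> {..<NU}. idx u = i}" using uN by simp
    qed
    show ?thesis using count_int[OF ab(1,2)] unfolding cnt_def eqs ba .
  qed
  have e1: "(\<Sum>i<N. (real (cnt i) - a i * NU / A) * w i) = (\<Sum>i<N. real (cnt i) * w i) - (NU / A) * (\<Sum>j<N. a j * w j)"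
  proof -
    have "(\<Sum>i<N. (real (cnt i) - a i * NU / A) * w i) = (\<Sum>i<N. real (cnt i) * w i - (NU / A) * (a i * w i))"
      by (intro sum.cong refl) (simp add: algebra_simps)
    also have "\<dots> = (\<Sum>i<N. real (cnt i) * w i) - (\<Sum>i<N. (NU / A) * (a i * w i))" by (rule sum_subtractf)
    also have "\<dots> = (\<Sum>i<N. real (cnt i) * w i) - (NU / A) * (\<Sum>j<N. a j * w j)" by (simp add: sum_distrib_left)
    finally show ?thesis .
  qed
  have e2: "(S - (NU / A) * T) / NU = S / NU - T / A" for S T :: real
    using NUp Ap by (simp add: field_simps)
  have "(\<Sum>u<NU. w (idx u)) / NU - (\<Sum>j<N. a j * w j) / A = (\<Sum>i<N. (real (cnt i) - a i * NU / A) * w i) / NU"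
    unfolding grp e1 e2 ..
  moreover have "\<bar>\<Sum>i<N. (real (cnt i) - a i * NU / A) * w i\<bar> \<le> real N * Wm"
  proof -
    have "\<bar>\<Sum>i<N. (real (cnt i) - a i * NU / A) * w i\<bar> \<le> (\<Sum>i<N. \<bar>(real (cnt i) - a i * NU / A) * w i\<bar>)"
      by (rule sum_abs)
    also have "\<dots> \<le> (\<Sum>i<N. Wm)"
    proof (rule sum_mono)
      fix i assume "i \<in> {..<N}"
      then have "\<bar>real (cnt i) - a i * NU / A\<bar> \<le> 1" "\<bar>w i\<bar> \<le> Wm" using cnt_close w by auto
      then have "\<bar>real (cnt i) - a i * NU / A\<bar> * \<bar>w i\<bar> \<le> 1 * Wm" by (intro mult_mono) auto
      then show "\<bar>(real (cnt i) - a i * NU / A) * w i\<bar> \<le> Wm" by (simp add: abs_mult)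
    qed
    finally show ?thesis by simp
  qed
  ultimately show ?thesis using NUp by (simp add: idx_def A_def abs_divide divide_right_mono)
qed


lemma sum_nth_distinct:
  assumes "distinct xs"
  shows "(\<Sum>j<length xs. h (xs!j)) = (\<Sum>y\<in>set xs. h y)"
proof -
  have s: "set xs = (!) xs ` {..<length xs}" by (auto simp: in_set_conv_nth)
  have i: "inj_on ((!) xs) {..<length xs}" using assms by (simp add: inj_on_nth)
  show ?thesis unfolding s by (simp add: sum.reindex[OF i])
qed

lemma ln_diff_bound:
  fixes c x y :: real
  assumes c: "0 < c" "c \<le> x" "c \<le> y"
  shows "\<bar>ln x - ln y\<bar> \<le> \<bar>x - y\<bar> / c"
proof -
  have xp: "x > 0" "y > 0" using c by linarith+
  have a: "ln x - ln y \<le> \<bar>x - y\<bar> / c"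
  proof -
    have "ln x - ln y = ln (x / y)" using xp by (simp add: ln_div)
    also have "\<dots> \<le> x / y - 1" using xp by (intro ln_le_minus_one) auto
    also have "\<dots> = (x - y) / y" using xp by (simp add: field_simps)
    also have "\<dots> \<le> \<bar>x - y\<bar> / y" using xp by (intro divide_right_mono) auto
    also have "\<dots> \<le> \<bar>x - y\<bar> / c" using xp c by (intro divide_left_mono) auto
    finally show ?thesis .
  qed
  have b: "ln y - ln x \<le> \<bar>x - y\<bar> / c"
  proof -
    have "ln y - ln x = ln (y / x)" using xp by (simp add: ln_div)
    also have "\<dots> \<le> y / x - 1" using xp by (intro ln_le_minus_one) auto
    also have "\<dots> = (y - x) / x" using xp by (simp add: field_simps)
    also have "\<dots> \<le> \<bar>x - y\<bar> / x" using xp by (intro divide_right_mono) auto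
    also have "\<dots> \<le> \<bar>x - y\<bar> / c" using xp c by (intro divide_left_mono) auto
    finally show ?thesis .
  qed
  show ?thesis using a b by linarith
qed

lemma avg_bounds:
  fixes Y :: "'a \<Rightarrow> real"
  assumes "finite S" "S \<noteq> {}" "\<forall>x\<in>S. lo \<le> Y x \<and> Y x \<le> hi"
  shows "lo \<le> (\<Sum>x\<in>S. Y x) / card S" "(\<Sum>x\<in>S. Y x) / card S \<le> hi"
proof -
  have c: "real (card S) > 0" using assms by (simp add: card_gt_0_iff)
  have "(\<Sum>x\<in>S. lo) \<le> (\<Sum>x\<in>S. Y x)" using assms(3) by (intro sum_mono) auto
  then have "real (card S) * lo \<le> (\<Sum>x\<in>S. Y x)" by simp
  then show "lo \<le> (\<Sum>x\<in>S. Y x) / card S" using c by (simp add: field_simps)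
  have "(\<Sum>x\<in>S. Y x) \<le> (\<Sum>x\<in>S. hi)" using assms(3) by (intro sum_mono) auto
  then have "(\<Sum>x\<in>S. Y x) \<le> real (card S) * hi" by simp
  then show "(\<Sum>x\<in>S. Y x) / card S \<le> hi" using c by (simp add: field_simps)
qed

lemma wavg_bounds:
  fixes a w :: "nat \<Rightarrow> real"
  assumes "N \<ge> 1" "\<forall>j<N. a j > 0" "\<forall>j<N. lo \<le> w j \<and> w j \<le> hi"
  shows "lo \<le> (\<Sum>j<N. a j * w j) / cum a N" "(\<Sum>j<N. a j * w j) / cum a N \<le> hi"
proof -
  have A: "cum a N > 0" by (rule cum_pos[OF assms(1,2)])
  have "(\<Sum>j<N. a j * lo) \<le> (\<Sum>j<N. a j * w j)" using assms(2,3) by (intro sum_mono mult_left_mono) auto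
  then have "cum a N * lo \<le> (\<Sum>j<N. a j * w j)" by (simp add: cum_def sum_distrib_right)
  then show "lo \<le> (\<Sum>j<N. a j * w j) / cum a N" using A by (simp add: field_simps)
  have "(\<Sum>j<N. a j * w j) \<le> (\<Sum>j<N. a j * hi)" using assms(2,3) by (intro sum_mono mult_left_mono) auto
  then have "(\<Sum>j<N. a j * w j) \<le> cum a N * hi" by (simp add: cum_def sum_distrib_right)
  then show "(\<Sum>j<N. a j * w j) / cum a N \<le> hi" using A by (simp add: field_simps)
qed

lemma est_error:
  fixes w a :: "nat \<Rightarrow> real"
  assumes N: "N \<ge> 1" and NU: "NU \<ge> 1" and k: "k \<ge> 1"
    and a: "\<forall>j<N. a j > 0" and w: "\<forall>j<N. exp (-E) \<le> w j \<and> w j \<le> exp E"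
  defines "U \<equiv> real ` {..<NU}"
  defines "idx \<equiv> (\<lambda>x. sel N a ((x + 1/2) * cum a N / NU))"
  shows "(\<Sum>\<omega>\<in>Om U k. \<bar>ln ((\<Sum>i<k. w (idx (\<omega> i))) / k) - ln ((\<Sum>j<N. a j * w j) / cum a N)\<bar>) / card (Om U k)
     \<le> exp E * ((exp E - exp (-E)) / sqrt k + real N * exp E / NU)"
proof -
  define Y where "Y = (\<lambda>x. w (idx x))"
  define Ws where "Ws = (\<Sum>j<N. a j * w j) / cum a N"
  define W' where "W' = (\<Sum>x\<in>U. Y x) / card U"
  define What where "What = (\<lambda>\<omega>::nat\<Rightarrow>real. (\<Sum>i<k. Y (\<omega> i)) / k)"
  have "0 \<in> {..<NU}" using NU by simp
  then have Uf: "finite U" "U \<noteq> {}" by (auto simp: U_def)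
  have cU: "card U = NU" unfolding U_def using card_image[of real "{..<NU}"] by (simp add: inj_on_def)
  have idx_lt: "idx x < N" for x unfolding idx_def by (rule sel_lt[OF N])
  have Yb: "exp (-E) \<le> Y x \<and> Y x \<le> exp E" for x using w idx_lt by (simp add: Y_def)
  have W'b: "exp (-E) \<le> W'" "W' \<le> exp E" unfolding W'_def using avg_bounds[OF Uf, of "exp (-E)" Y "exp E"] Yb by auto
  have Wsb: "exp (-E) \<le> Ws" "Ws \<le> exp E" unfolding Ws_def using wavg_bounds[OF N a w] by auto
  have Whb: "exp (-E) \<le> What \<omega>" for \<omega>
  proof -
    have "0 \<in> {..<k}" using k by simp
    then have ne: "{..<k} \<noteq> {}" by blast
    have "exp (-E) \<le> (\<Sum>i\<in>{..<k}. Y (\<omega> i)) / card {..<k}"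
      using avg_bounds(1)[OF _ ne, of "exp (-E)" "\<lambda>i. Y (\<omega> i)" "exp E"] Yb by auto
    then show ?thesis by (simp add: What_def)
  qed
  have pt: "\<bar>ln (What \<omega>) - ln Ws\<bar> \<le> exp E * (\<bar>What \<omega> - W'\<bar> + \<bar>W' - Ws\<bar>)" for \<omega>
  proof -
    have "\<bar>ln (What \<omega>) - ln Ws\<bar> \<le> \<bar>What \<omega> - Ws\<bar> / exp (-E)"
      by (rule ln_diff_bound[OF exp_gt_zero Whb Wsb(1)])
    also have "\<dots> = exp E * \<bar>What \<omega> - Ws\<bar>" by (simp add: exp_minus field_simps)
    also have "\<dots> \<le> exp E * (\<bar>What \<omega> - W'\<bar> + \<bar>W' - Ws\<bar>)" by (intro mult_left_mono) auto
    finally show ?thesis .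
  qed
  define \<Omega> where "\<Omega> = Om U k"
  have Of: "finite \<Omega>" "\<Omega> \<noteq> {}" unfolding \<Omega>_def using Om_finite[OF Uf(1)] Om_ne[OF Uf(2)] by auto
  have cO: "real (card \<Omega>) > 0" using Of by (simp add: card_gt_0_iff)
  have mc: "(\<Sum>\<omega>\<in>\<Omega>. \<bar>What \<omega> - W'\<bar>) / card \<Omega> \<le> (exp E - exp (-E)) / sqrt k"
  proof -
    have R: "\<forall>x\<in>U. \<bar>Y x - (\<Sum>u\<in>U. Y u) / card U\<bar> \<le> exp E - exp (-E)"
    proof
      fix x assume "x \<in> U"
      have "exp (-E) \<le> Y x" "Y x \<le> exp E" using Yb[of x] by auto
      then show "\<bar>Y x - (\<Sum>u\<in>U. Y u) / card U\<bar> \<le> exp E - exp (- E)"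
        using W'b unfolding W'_def by (simp add: abs_le_iff)
    qed
    show ?thesis using mc_bound[OF Uf k R] unfolding What_def W'_def \<Omega>_def .
  qed
  have sb: "\<bar>W' - Ws\<bar> \<le> real N * exp E / NU"
  proof -
    have "(\<Sum>x\<in>U. Y x) = (\<Sum>u<NU. Y (real u))" unfolding U_def
      using sum.reindex[of real "{..<NU}" Y] by (simp add: inj_on_def)
    then have "W' = (\<Sum>u<NU. w (sel N a ((real u + 1/2) * cum a N / NU))) / NU"
      unfolding W'_def cU by (simp add: Y_def idx_def)
    moreover have wa: "\<forall>j<N. \<bar>w j\<bar> \<le> exp E"
    proof (intro allI impI)
      fix j assume "j < N"
      then have "exp (-E) \<le> w j" "w j \<le> exp E" using w by auto
      moreover have "0 < exp (-E)" by simp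
      ultimately show "\<bar>w j\<bar> \<le> exp E" by linarith
    qed
    ultimately show ?thesis using sample_bias[OF N NU a wa] unfolding Ws_def by simp
  qed
  have "(\<Sum>\<omega>\<in>\<Omega>. \<bar>ln (What \<omega>) - ln Ws\<bar>) \<le> (\<Sum>\<omega>\<in>\<Omega>. exp E * (\<bar>What \<omega> - W'\<bar> + \<bar>W' - Ws\<bar>))"
    by (rule sum_mono) (rule pt)
  also have "\<dots> = exp E * (\<Sum>\<omega>\<in>\<Omega>. \<bar>What \<omega> - W'\<bar> + \<bar>W' - Ws\<bar>)"
    by (rule sum_distrib_left[symmetric])
  also have "\<dots> = exp E * ((\<Sum>\<omega>\<in>\<Omega>. \<bar>What \<omega> - W'\<bar>) + (\<Sum>\<omega>\<in>\<Omega>. \<bar>W' - Ws\<bar>))"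
    by (subst sum.distrib) (rule refl)
  also have "\<dots> = exp E * ((\<Sum>\<omega>\<in>\<Omega>. \<bar>What \<omega> - W'\<bar>) + real (card \<Omega>) * \<bar>W' - Ws\<bar>)"
    by simp
  finally have "(\<Sum>\<omega>\<in>\<Omega>. \<bar>ln (What \<omega>) - ln Ws\<bar>) / card \<Omega>
      \<le> exp E * ((\<Sum>\<omega>\<in>\<Omega>. \<bar>What \<omega> - W'\<bar>) + real (card \<Omega>) * \<bar>W' - Ws\<bar>) / card \<Omega>"
    using cO by (intro divide_right_mono) auto
  also have "\<dots> = exp E * ((\<Sum>\<omega>\<in>\<Omega>. \<bar>What \<omega> - W'\<bar>) / card \<Omega> + \<bar>W' - Ws\<bar>)"
    using cO by (simp add: field_simps)
  also have "\<dots> \<le> exp E * ((exp E - exp (-E)) / sqrt k + real N * exp E / NU)"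
    using mc sb by (intro mult_left_mono add_mono) auto
  finally show ?thesis unfolding What_def Y_def Ws_def \<Omega>_def .
qed


definition flist :: "nat \<Rightarrow> (real^'d) list" where
  "flist F = (SOME xs. set xs = FG F \<and> distinct xs)"

lemma flist_set: "set (flist F :: (real^'d) list) = FG F" and flist_distinct: "distinct (flist F :: (real^'d) list)"
proof -
  have "\<exists>xs. set xs = (FG F :: (real^'d) set) \<and> distinct xs"
    by (rule finite_distinct_list[OF FG_finite])
  then have "set (flist F) = (FG F :: (real^'d) set) \<and> distinct (flist F :: (real^'d) list)"
    unfolding flist_def by (rule someI_ex)
  then show "set (flist F :: (real^'d) list) = FG F" "distinct (flist F :: (real^'d) list)" by auto
qed

lemma flist_ne: "F \<ge> 1 \<Longrightarrow> length (flist F :: (real^'d) list) \<ge> 1"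
proof -
  assume F: "F \<ge> 1"
  have "(0::real^'d) \<in> FG F" using FG_ne[where 'd='d, of F] F by auto
  then have "flist F \<noteq> ([] :: (real^'d) list)" using flist_set[where 'd='d, of F] by auto
  then show ?thesis by (cases "flist F :: (real^'d) list") auto
qed

lemma flist_cube: "j < length (flist F :: (real^'d) list) \<Longrightarrow> (flist F :: (real^'d) list) ! j \<in> cube"
proof -
  assume j: "j < length (flist F :: (real^'d) list)"
  have "(flist F :: (real^'d) list) ! j \<in> set (flist F :: (real^'d) list)" by (rule nth_mem[OF j])
  then have "(flist F :: (real^'d) list) ! j \<in> FG F" by (simp only: flist_set)
  then show ?thesis by (rule FG_cube)
qed

definition gfun :: "nat \<Rightarrow> real \<Rightarrow> (real^'d) list \<Rightarrow> real list \<Rightarrow> (real^'d \<Rightarrow> real)" where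
  "gfun m B xs ys = (SOME h. h \<in> consist m B xs (take (length xs) ys))"

definition wts :: "nat \<Rightarrow> real \<Rightarrow> (real^'d) list \<Rightarrow> (real^'d) list \<Rightarrow> real list \<Rightarrow> nat \<Rightarrow> real" where
  "wts m B xs fl ys j = exp (gfun m B xs ys (fl ! j))"

definition idxf :: "nat \<Rightarrow> real \<Rightarrow> (real^'d) list \<Rightarrow> (real^'d) list \<Rightarrow> nat \<Rightarrow> real list \<Rightarrow> real \<Rightarrow> nat" where
  "idxf m B xs fl NU ys x = sel (length fl) (wts m B xs fl ys) ((x + 1/2) * cum (wts m B xs fl ys) (length fl) / NU)"

definition PsiR :: "nat \<Rightarrow> real \<Rightarrow> (real^'d) list \<Rightarrow> (real^'d) list \<Rightarrow> nat \<Rightarrow> nat \<Rightarrow> (nat \<Rightarrow> real) \<Rightarrow> real list \<Rightarrow> real^'d" where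
  "PsiR m B xs fl NU k \<omega> ys = (if length ys < length xs then xs ! length ys
      else if length ys < length xs + k then fl ! idxf m B xs fl NU ys (\<omega> (length ys - length xs)) else 0)"

definition PhiR :: "nat \<Rightarrow> real \<Rightarrow> (real^'d) list \<Rightarrow> (real^'d) list \<Rightarrow> nat \<Rightarrow> nat \<Rightarrow> nat \<Rightarrow> (nat \<Rightarrow> real) \<Rightarrow> real list \<Rightarrow> real" where
  "PhiR m B xs fl NU k F \<omega> ys = ln ((1 / real F)^CARD('d) * cum (wts m B xs fl ys) (length fl))
     + ln ((\<Sum>i<k. exp (ys ! (length xs + i) - gfun m B xs ys (fl ! idxf m B xs fl NU ys (\<omega> i)))) / k)"

lemma gfun_take: "take (length xs) ys = take (length xs) ys' \<Longrightarrow> gfun m B xs ys = gfun m B xs ys'"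
  by (simp add: gfun_def)

lemma info_cong: "(\<forall>ys. length ys < j \<longrightarrow> \<psi>1 ys = \<psi>2 ys) \<Longrightarrow> info \<psi>1 f j = info \<psi>2 f j"
proof (induction j)
  case 0 then show ?case by simp
next
  case (Suc j)
  then have "info \<psi>1 f j = info \<psi>2 f j" by auto
  moreover have "\<psi>1 (info \<psi>2 f j) = \<psi>2 (info \<psi>2 f j)" using Suc.prems by simp
  ultimately show ?case by (simp add: Let_def)
qed

lemma PsiR_cube:
  assumes "F \<ge> 1"
  shows "PsiR m B (nodes m K :: (real^'d) list) (flist F) NU k \<omega> ys \<in> cube"
proof -
  let ?xs = "nodes m K :: (real^'d) list"
  let ?fl = "flist F :: (real^'d) list"
  have "PsiD ?xs ys \<in> cube" by (rule PsiD_cube)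
  moreover have "?fl ! idxf m B ?xs ?fl NU ys x \<in> cube" for x
  proof -
    have "idxf m B ?xs ?fl NU ys x < length ?fl" unfolding idxf_def by (rule sel_lt[OF flist_ne[OF assms]])
    then show ?thesis by (rule flist_cube)
  qed
  moreover have "(0::real^'d) \<in> cube" by (simp add: mem_cube)
  ultimately show ?thesis unfolding PsiR_def PsiD_def by auto
qed


lemma ln_mult_pos: "0 < x \<Longrightarrow> 0 < y \<Longrightarrow> ln (x * y) = ln x + ln (y::real)"
  by (simp add: ln_mult)

lemma rand_error:
  fixes f :: "real^'d \<Rightarrow> real"
  assumes m1: "m \<ge> 1" and K1: "K \<ge> 1" and F1: "F \<ge> 1" and NU1: "NU \<ge> 1" and k1: "k \<ge> 1"
    and f: "f \<in> Fclass m B" and len: "length (nodes m K :: (real^'d) list) + k \<le> n"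
  defines "xs \<equiv> nodes m K :: (real^'d) list"
  defines "fl \<equiv> flist F :: (real^'d) list"
  defines "E \<equiv> beta m CARD('d) * B * (1 / real K)^m"
  shows "(\<Sum>\<omega>\<in>Om (real ` {..<NU}) k. \<bar>logint f - PhiR m B xs fl NU k F \<omega> (info (PsiR m B xs fl NU k \<omega>) f n)\<bar>)
      / card (Om (real ` {..<NU}) k)
    \<le> B * real CARD('d) / real F + exp E * ((exp E - exp (-E)) / sqrt k + real (length fl) * exp E / NU)"
proof -
  define N0 where "N0 = length xs"
  define Nc where "Nc = length fl"
  have Nc1: "Nc \<ge> 1" unfolding Nc_def fl_def by (rule flist_ne[OF F1])
  define Y0 where "Y0 = info (PsiD xs) f N0"
  have Y0j: "\<forall>j<length xs. Y0 ! j = f (xs ! j)"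
    unfolding Y0_def N0_def using info_nodes[of xs "length xs"] by simp
  define g0 where "g0 = (SOME h. h \<in> consist m B xs Y0)"
  have fcons: "f \<in> consist m B xs Y0" using f Y0j by (simp add: consist_def)
  have g0cons: "g0 \<in> consist m B xs Y0" unfolding g0_def by (rule someI[of "\<lambda>h. h \<in> consist m B xs Y0" f, OF fcons])
  have close: "\<forall>x\<in>cube. \<bar>g0 x - f x\<bar> \<le> E"
    unfolding E_def using consist_close[OF K1 f _ g0cons[unfolded xs_def]] Y0j unfolding xs_def by auto
  define a0 where "a0 = (\<lambda>j. exp (g0 (fl ! j)))"
  define w where "w = (\<lambda>j. exp (f (fl ! j) - g0 (fl ! j)))"
  have a0pos: "\<forall>j<Nc. a0 j > 0" by (simp add: a0_def)
  have wb: "\<forall>j<Nc. exp (-E) \<le> w j \<and> w j \<le> exp E"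
  proof (intro allI impI)
    fix j assume "j < Nc"
    then have "fl ! j \<in> cube" unfolding Nc_def fl_def by (rule flist_cube)
    then have "\<bar>g0 (fl ! j) - f (fl ! j)\<bar> \<le> E" using close by blast
    then show "exp (-E) \<le> w j \<and> w j \<le> exp E" by (simp add: w_def abs_le_iff)
  qed
  define idx0 where "idx0 = (\<lambda>x. sel Nc a0 ((x + 1/2) * cum a0 Nc / NU))"
  have gtake: "gfun m B xs ys = g0" if "take N0 ys = Y0" for ys
    unfolding gfun_def g0_def using that by (simp add: N0_def)
  have wtake: "wts m B xs fl ys = a0" if "take N0 ys = Y0" for ys
    using gtake[OF that] by (simp add: wts_def a0_def fun_eq_iff)
  have itake: "idxf m B xs fl NU ys = idx0" if "take N0 ys = Y0" for ys
  proof -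
    have "wts m B xs fl ys = a0" by (rule wtake[OF that])
    then show ?thesis by (intro ext) (simp add: idxf_def idx0_def Nc_def)
  qed
  have pt: "\<bar>logint f - PhiR m B xs fl NU k F \<omega> (info (PsiR m B xs fl NU k \<omega>) f n)\<bar>
      \<le> B * real CARD('d) / real F + \<bar>ln ((\<Sum>i<k. w (idx0 (\<omega> i))) / k) - ln ((\<Sum>j<Nc. a0 j * w j) / cum a0 Nc)\<bar>"
    for \<omega>
  proof -
    define Y where "Y = info (PsiR m B xs fl NU k \<omega>) f n"
    have tk: "take N0 (info (PsiR m B xs fl NU k \<omega>) f j) = Y0" if "N0 \<le> j" for j
    proof -
      have "take N0 (info (PsiR m B xs fl NU k \<omega>) f j) = info (PsiR m B xs fl NU k \<omega>) f N0"
        using that by (rule info_take)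
      also have "\<dots> = Y0" unfolding Y0_def
        by (rule info_cong) (simp add: PsiR_def PsiD_def N0_def)
      finally show ?thesis .
    qed
    have N0n: "N0 \<le> n" using len by (simp add: N0_def xs_def)
    have tY: "take N0 Y = Y0" unfolding Y_def by (rule tk[OF N0n])
    have Yi: "Y ! (N0 + i) = f (fl ! idx0 (\<omega> i))" if i: "i < k" for i
    proof -
      define Z where "Z = info (PsiR m B xs fl NU k \<omega>) f (N0 + i)"
      have "Y ! (N0 + i) = f (PsiR m B xs fl NU k \<omega> Z)"
        unfolding Y_def Z_def using len i by (intro info_nth) (simp add: N0_def xs_def)
      moreover have "length Z = N0 + i" by (simp add: Z_def)
      moreover have "take N0 Z = Y0" unfolding Z_def by (rule tk) simp
      ultimately show ?thesis using i by (simp add: PsiR_def N0_def itake)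
    qed
    have Phi: "PhiR m B xs fl NU k F \<omega> Y = ln ((1 / real F)^CARD('d) * cum a0 Nc) + ln ((\<Sum>i<k. w (idx0 (\<omega> i))) / k)"
    proof -
      have "(\<Sum>i<k. exp (Y ! (length xs + i) - gfun m B xs Y (fl ! idxf m B xs fl NU Y (\<omega> i))))
          = (\<Sum>i<k. w (idx0 (\<omega> i)))"
        by (intro sum.cong refl) (simp add: Yi[unfolded N0_def] gtake[OF tY] itake[OF tY] w_def)
      then show ?thesis unfolding PhiR_def using wtake[OF tY] Nc_def by simp
    qed
    define Ws where "Ws = (\<Sum>j<Nc. a0 j * w j) / cum a0 Nc"
    have A: "cum a0 Nc > 0" by (rule cum_pos[OF Nc1 a0pos])
    have sumfe: "(\<Sum>j<Nc. a0 j * w j) = (\<Sum>y\<in>FG F. exp (f y))"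
    proof -
      have "(\<Sum>j<Nc. a0 j * w j) = (\<Sum>j<Nc. exp (f (fl ! j)))"
        by (intro sum.cong refl) (simp add: a0_def w_def exp_add[symmetric])
      also have "\<dots> = (\<Sum>y\<in>set fl. exp (f y))" unfolding Nc_def
        by (rule sum_nth_distinct) (simp add: fl_def flist_distinct)
      finally show ?thesis by (simp add: fl_def flist_set)
    qed
    have Spos: "(\<Sum>j<Nc. a0 j * w j) > 0"
    proof -
      have "0 \<in> {..<Nc}" using Nc1 by simp
      moreover have "a0 j * w j > 0" for j by (simp add: a0_def w_def)
      ultimately show ?thesis by (intro sum_pos) auto
    qed
    have rho: "(1 / real F)^CARD('d) > 0" using F1 by simp
    have "ln ((1 / real F)^CARD('d) * cum a0 Nc) + ln Ws = ln (\<Sum>y\<in>FG F. (1 / real F)^CARD('d) * exp (f y))"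
    proof -
      have "ln ((1 / real F)^CARD('d) * cum a0 Nc) + ln Ws = ln ((1 / real F)^CARD('d) * cum a0 Nc * Ws)"
      proof -
        have pA: "(1 / real F)^CARD('d) * cum a0 Nc > 0" using rho A by simp
        have WsP: "Ws > 0" using A Spos by (simp add: Ws_def)
        show ?thesis using ln_mult_pos[OF pA WsP] by simp
      qed
      also have "(1 / real F)^CARD('d) * cum a0 Nc * Ws = (1 / real F)^CARD('d) * (\<Sum>j<Nc. a0 j * w j)"
        using A by (simp add: Ws_def)
      also have "\<dots> = (\<Sum>y\<in>FG F. (1 / real F)^CARD('d) * exp (f y))"
        by (simp add: sumfe sum_distrib_left)
      finally show ?thesis .
    qed
    moreover have "\<bar>ln (\<Sum>y\<in>FG F. (1 / real F)^CARD('d) * exp (f y)) - logint f\<bar> \<le> B * real CARD('d) / real F"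
      by (rule riemann[OF f m1 F1])
    ultimately have "\<bar>logint f - PhiR m B xs fl NU k F \<omega> Y\<bar>
        \<le> B * real CARD('d) / real F + \<bar>ln ((\<Sum>i<k. w (idx0 (\<omega> i))) / k) - ln Ws\<bar>"
      unfolding Phi by linarith
    then show ?thesis unfolding Y_def Ws_def .
  qed
  define \<Omega> where "\<Omega> = Om (real ` {..<NU}) k"
  have "0 \<in> {..<NU}" using NU1 by simp
  then have Uf: "finite (real ` {..<NU})" "real ` {..<NU} \<noteq> {}" by auto
  have Of: "finite \<Omega>" "\<Omega> \<noteq> {}" unfolding \<Omega>_def using Om_finite[OF Uf(1)] Om_ne[OF Uf(2)] by auto
  have cO: "real (card \<Omega>) > 0" using Of by (simp add: card_gt_0_iff)
  have "(\<Sum>\<omega>\<in>\<Omega>. \<bar>logint f - PhiR m B xs fl NU k F \<omega> (info (PsiR m B xs fl NU k \<omega>) f n)\<bar>)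
      \<le> (\<Sum>\<omega>\<in>\<Omega>. B * real CARD('d) / real F + \<bar>ln ((\<Sum>i<k. w (idx0 (\<omega> i))) / k) - ln ((\<Sum>j<Nc. a0 j * w j) / cum a0 Nc)\<bar>)"
    by (rule sum_mono) (rule pt)
  also have "\<dots> = real (card \<Omega>) * (B * real CARD('d) / real F) + (\<Sum>\<omega>\<in>\<Omega>. \<bar>ln ((\<Sum>i<k. w (idx0 (\<omega> i))) / k) - ln ((\<Sum>j<Nc. a0 j * w j) / cum a0 Nc)\<bar>)"
    by (subst sum.distrib) simp
  finally have s1: "(\<Sum>\<omega>\<in>\<Omega>. \<bar>logint f - PhiR m B xs fl NU k F \<omega> (info (PsiR m B xs fl NU k \<omega>) f n)\<bar>) / card \<Omega>
      \<le> (real (card \<Omega>) * (B * real CARD('d) / real F) + (\<Sum>\<omega>\<in>\<Omega>. \<bar>ln ((\<Sum>i<k. w (idx0 (\<omega> i))) / k) - ln ((\<Sum>j<Nc. a0 j * w j) / cum a0 Nc)\<bar>)) / card \<Omega>"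
    using cO by (intro divide_right_mono) auto
  have s2: "(\<Sum>\<omega>\<in>\<Omega>. \<bar>ln ((\<Sum>i<k. w (idx0 (\<omega> i))) / k) - ln ((\<Sum>j<Nc. a0 j * w j) / cum a0 Nc)\<bar>) / card \<Omega>
      \<le> exp E * ((exp E - exp (-E)) / sqrt k + real Nc * exp E / NU)"
    unfolding \<Omega>_def idx0_def by (rule est_error[OF Nc1 NU1 k1 a0pos wb])
  have e: "(real (card \<Omega>) * X + S) / card \<Omega> = X + S / card \<Omega>" for X S using cO by (simp add: field_simps)
  show ?thesis using s1 s2 unfolding e \<Omega>_def[symmetric] Nc_def by linarith
qed


lemma rand_alg_bound:
  fixes F :: "(real^'d \<Rightarrow> real) set" and \<Psi> :: "(nat \<Rightarrow> real) \<Rightarrow> real list \<Rightarrow> real^'d"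
  assumes "finite \<Omega>" "\<Omega> \<noteq> {}" "\<forall>\<omega> ys. \<Psi> \<omega> ys \<in> cube"
    "\<forall>f\<in>F. (\<Sum>\<omega>\<in>\<Omega>. \<bar>S f - \<Phi> \<omega> (info (\<Psi> \<omega>) f n)\<bar>) / card \<Omega> \<le> b"
  shows "sigma_ad TYPE(nat \<Rightarrow> real) n F S \<le> ennreal b"
proof -
  have alg: "rand_alg n F (measure_pmf (pmf_of_set \<Omega>)) \<Psi> \<Phi>"
    by (rule pmf_rand_alg[OF assms(1,2,3)])
  show ?thesis
  proof (rule sigma_le[OF alg], intro ballI)
    fix f assume f: "f \<in> F"
    have "(\<integral>\<^sup>+ \<omega>. ennreal \<bar>S f - \<Phi> \<omega> (info (\<Psi> \<omega>) f n)\<bar> \<partial>measure_pmf (pmf_of_set \<Omega>))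
        = ennreal ((\<Sum>\<omega>\<in>\<Omega>. \<bar>S f - \<Phi> \<omega> (info (\<Psi> \<omega>) f n)\<bar>) / card \<Omega>)"
      by (rule pmf_avg[OF assms(1,2)]) auto
    also have "\<dots> \<le> ennreal b" using assms(4) f by (intro ennreal_leI) auto
    finally show "(\<integral>\<^sup>+ \<omega>. ennreal \<bar>S f - \<Phi> \<omega> (info (\<Psi> \<omega>) f n)\<bar> \<partial>measure_pmf (pmf_of_set \<Omega>)) \<le> ennreal b" .
  qed
qed

lemma exp_diff_le: "(E::real) \<ge> 0 \<Longrightarrow> exp E - exp (-E) \<le> 2 * E * exp E"
proof -
  assume E: "E \<ge> 0"
  have "1 + (-2*E) \<le> exp (-2*E)" by (rule exp_ge_add_one_self)
  then have "exp E * (1 - exp (-2*E)) \<le> exp E * (2 * E)" by (intro mult_left_mono) auto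
  moreover have "exp E * exp (-2*E) = exp (-E)" by (simp add: exp_add[symmetric])
  ultimately show ?thesis by (simp add: algebra_simps)
qed

lemma powr_split:
  assumes "x > 0"
  shows "x powr (- 1/2 - a) = 1 / (sqrt x * x powr a)"
proof -
  have "x powr (- 1/2 - a) = x powr (-(1/2)) * x powr (-a)" by (simp add: powr_add[symmetric])
  also have "\<dots> = 1 / (sqrt x * x powr a)" using assms by (simp add: powr_minus_divide powr_half_sqrt)
  finally show ?thesis .
qed


definition cE :: "nat \<Rightarrow> nat \<Rightarrow> real" where
  "cE m d = beta m d * 4^m * 2^(m*m)"

lemma md_le:
  assumes d: "(d::nat) \<ge> 1"
  shows "real m / real d \<le> real m"
proof -
  have "real m * 1 \<le> real m * real d" using d by (intro mult_left_mono) auto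
  moreover have "real d > 0" using d by simp
  ultimately show ?thesis by (simp add: divide_le_eq)
qed

lemma rand_case:
  fixes B :: real and n :: nat
  assumes m1: "m \<ge> 1" and B: "B > 0" and n: "n \<ge> 2 * (2^m)^CARD('d)"
  shows "sigma_ad TYPE(nat \<Rightarrow> real) n (Fclass m B :: (real^'d \<Rightarrow> real) set) logint
    \<le> ennreal ((2 + 4 * cE m CARD('d)) * exp (2 * cE m CARD('d) * (B * real n powr (- (real m / real CARD('d)))))
         * (B * real n powr (- 1/2 - real m / real CARD('d))))"
proof -
  define d where "d = CARD('d)"
  have d1: "d \<ge> 1" unfolding d_def by (rule card_ge1)
  define P :: nat where "P = 2^m"
  have P1: "P \<ge> 1" by (simp add: P_def)
  have "1 \<le> ((2::nat)^m)^CARD('d)" by simp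
  then have n2: "n \<ge> 2" using n by linarith
  define rn where "rn = real n"
  have rnp: "rn > 0" using n2 by (simp add: rn_def)
  define t where "t = rn powr (real m / real d)"
  have tp: "t > 0" using rnp by (simp add: t_def)
  define s where "s = sqrt rn"
  have sp: "s > 0" using rnp by (simp add: s_def)
  have e1: "real n powr (- (real m / real CARD('d))) = 1 / t"
    by (simp add: t_def rn_def d_def powr_minus_divide)
  have e2: "real n powr (- 1/2 - real m / real CARD('d)) = 1 / (s * t)"
    using powr_split[OF rnp, of "real m / real d"] by (simp add: t_def s_def rn_def d_def)
  define cc where "cc = cE m d"
  have b0: "beta m d \<ge> 0" by (rule beta_nonneg)
  have cc0: "cc \<ge> 0" using b0 by (simp add: cc_def cE_def)
  define r2 where "r2 = (rn / 2) powr (1 / real d)"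
  have r2p: "r2 > 0" using rnp by (simp add: r2_def)
  have Pr: "real P \<le> r2"
  proof -
    have "real P ^ d \<le> rn / 2" using n by (simp add: rn_def P_def d_def flip: of_nat_power)
    then have "(real P ^ d) powr (1 / real d) \<le> r2" unfolding r2_def by (intro powr_mono2) auto
    then show ?thesis using pow_root[of "real P" d] P1 d1 by simp
  qed
  define y where "y = r2 / real P"
  have y1: "y \<ge> 1" using Pr P1 by (simp add: y_def)
  define K where "K = nat \<lfloor>y\<rfloor>"
  have K1: "K \<ge> 1" using y1 by (simp add: K_def le_nat_iff)
  have Ky: "real K \<le> y" using y1 by (simp add: K_def)
  have yK: "y \<le> 2 * real K"
  proof -
    have "y < of_int \<lfloor>y\<rfloor> + 1" by linarith
    moreover have "real K = of_int \<lfloor>y\<rfloor>" using y1 by (simp add: K_def)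
    ultimately show ?thesis using K1 by linarith
  qed
  let ?xs = "nodes m K :: (real^'d) list"
  define N0 where "N0 = length ?xs"
  have N0n: "2 * N0 \<le> n"
  proof -
    have "real (K * P) \<le> r2" using Ky P1 by (simp add: y_def field_simps)
    then have "real (K * P) ^ d \<le> r2 ^ d" by (intro power_mono) auto
    also have "\<dots> = rn / 2" unfolding r2_def by (rule powr_root_d) (use rnp d1 in auto)
    finally have "real ((K * P) ^ d) \<le> rn / 2" by simp
    moreover have "N0 \<le> (K * P) ^ d" using nodes_length[where 'd='d, of m K] by (simp add: N0_def P_def d_def)
    ultimately have "real N0 \<le> rn / 2" by (meson of_nat_le_iff order_trans)
    then show ?thesis by (simp add: rn_def)
  qed
  define k where "k = n - N0"
  have k1: "k \<ge> 1" using N0n n2 by (simp add: k_def)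
  have kn: "real k \<ge> rn / 2" using N0n by (simp add: k_def rn_def of_nat_diff)
  have lenk: "length ?xs + k \<le> n" using N0n by (simp add: k_def N0_def)
  define F where "F = d * n^(m+1)"
  have F1: "F \<ge> 1" using d1 n2 by (simp add: F_def)
  define Q where "Q = n^(m+1) * (nat \<lceil>1 / B\<rceil> + 1)"
  have Q1: "Q \<ge> 1"
  proof -
    have a: "1 \<le> n^(m+1)" using n2 by simp
    have b: "1 \<le> nat \<lceil>1 / B\<rceil> + 1" by simp
    show ?thesis using mult_le_mono[OF a b] by (simp add: Q_def)
  qed
  let ?fl = "flist F :: (real^'d) list"
  define Nc where "Nc = length ?fl"
  have Nc1: "Nc \<ge> 1" unfolding Nc_def by (rule flist_ne[OF F1])
  define NU where "NU = Nc * Q"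
  have NU1: "NU \<ge> 1" using Nc1 Q1 by (simp add: NU_def)
  define E where "E = beta m CARD('d) * B * (1 / real K)^m"
  have E0: "E \<ge> 0" using b0 B by (simp add: E_def d_def)
  have st_le: "s * t \<le> real (n^(m+1))"
  proof -
    have "s * t = rn powr (1/2 + real m / real d)"
      using rnp by (simp add: s_def t_def powr_add powr_half_sqrt)
    also have "\<dots> \<le> rn powr (real (m+1))"
    proof (rule powr_mono)
      have "real m / real d \<le> real m" using d1 by (rule md_le)
      then show "1/2 + real m / real d \<le> real (m+1)" by simp
      show "1 \<le> rn" using n2 by (simp add: rn_def)
    qed
    also have "\<dots> = real (n^(m+1))" using powr_realpow[OF rnp, of "m+1"] by (simp add: rn_def)
    finally show ?thesis .
  qed
  define rate2 where "rate2 = B / (s * t)"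
  have r2p': "rate2 > 0" using B sp tp by (simp add: rate2_def)
  have Bn: "B / real (n^(m+1)) \<le> rate2"
    unfolding rate2_def using st_le B sp tp n2 by (intro divide_left_mono) (auto intro!: mult_pos_pos)
  have t1: "B * real d / real F \<le> rate2"
  proof -
    have "B * real d / real F = B / real (n^(m+1))" using d1 by (simp add: F_def)
    then show ?thesis using Bn by simp
  qed
  have t2: "real Nc / real NU \<le> rate2"
  proof -
    have Nc0: "real Nc > 0" using Nc1 by simp
    have "real Nc / real NU = 1 / real Q" using Nc0 by (simp add: NU_def)
    also have "\<dots> \<le> B / real (n^(m+1))"
    proof -
      have "1 / B \<le> real (nat \<lceil>1 / B\<rceil> + 1)" by linarith
      then have "real (n^(m+1)) / B \<le> real (n^(m+1)) * real (nat \<lceil>1 / B\<rceil> + 1)"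
        using n2 by (simp add: divide_inverse mult_left_mono)
      moreover have "real Q = real (n^(m+1)) * real (nat \<lceil>1 / B\<rceil> + 1)" by (simp only: Q_def of_nat_mult)
      ultimately have "real (n^(m+1)) / B \<le> real Q" by simp
      moreover have "real (n^(m+1)) > 0" using n2 by simp
      moreover have "real Q > 0" using Q1 by simp
      ultimately show ?thesis using B by (simp add: field_simps)
    qed
    also have "\<dots> \<le> rate2" by (rule Bn)
    finally show ?thesis .
  qed
  have Ebound: "E \<le> cc * (B / t)"
  proof -
    have Kpos: "real K > 0" using K1 by simp
    have "1 / real K \<le> 2 * real P / r2" using yK Kpos y1 P1 by (simp add: y_def field_simps)
    then have "(1 / real K)^m \<le> (2 * real P / r2)^m" by (intro power_mono) auto
    also have "\<dots> = 2^m * 2^(m*m) / r2^m" by (simp add: P_def power_divide power_mult_distrib power_mult[symmetric])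
    also have "\<dots> \<le> 2^m * 2^(m*m) / (t / 2^m)"
    proof -
      have "r2^m = (rn / 2) powr (real m / real d)"
        unfolding r2_def using powr_root_pow[of "rn/2" d m] rnp d1 by simp
      also have "\<dots> = t / 2 powr (real m / real d)" using rnp by (simp add: t_def powr_divide)
      also have "\<dots> \<ge> t / 2^m"
      proof -
        have "2 powr (real m / real d) \<le> 2 powr (real m)"
          using md_le[OF d1, of m] by (intro powr_mono) auto
        also have "\<dots> = 2^m" by (simp add: powr_realpow)
        finally show ?thesis using tp by (intro divide_left_mono) auto
      qed
      finally have "t / 2^m \<le> r2^m" .
      then show ?thesis using tp r2p by (intro divide_left_mono) auto
    qed
    also have "\<dots> = 4^m * 2^(m*m) / t" by (simp add: power_mult_distrib[symmetric] field_simps)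
    finally have "(1 / real K)^m \<le> 4^m * 2^(m*m) / t" .
    then have "beta m d * B * (1 / real K)^m \<le> beta m d * B * (4^m * 2^(m*m) / t)"
      using b0 B by (intro mult_left_mono) auto
    then show ?thesis by (simp add: E_def cc_def cE_def d_def mult_ac)
  qed
  have t3: "(exp E - exp (-E)) / sqrt k \<le> 4 * cc * exp E * rate2"
  proof -
    have sk: "sqrt k \<ge> s / 2"
    proof -
      have "(s/2)^2 \<le> rn / 2" using rnp by (simp add: s_def power_divide)
      also have "\<dots> \<le> real k" by (rule kn)
      finally show ?thesis by (metis real_le_rsqrt)
    qed
    have skp: "sqrt k > 0" using k1 by simp
    have "(exp E - exp (-E)) / sqrt k \<le> 2 * E * exp E / sqrt k"
      using exp_diff_le[OF E0] skp by (intro divide_right_mono) auto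
    also have "\<dots> \<le> 2 * E * exp E / (s / 2)"
      using sk sp E0 skp by (intro divide_left_mono) auto
    also have "\<dots> = 4 * exp E * (E / s)" by (simp add: field_simps)
    also have "\<dots> \<le> 4 * exp E * (cc * (B / t) / s)"
      using Ebound sp by (intro mult_left_mono divide_right_mono) auto
    also have "\<dots> = 4 * cc * exp E * rate2" by (simp add: rate2_def field_simps)
    finally show ?thesis .
  qed
  have main: "B * real d / real F + exp E * ((exp E - exp (-E)) / sqrt k + real Nc * exp E / NU)
      \<le> (2 + 4 * cc) * exp (2 * cc * (B / t)) * rate2"
  proof -
    have "real Nc * exp E / NU = exp E * (real Nc / NU)" by simp
    also have "\<dots> \<le> exp E * rate2" using t2 by (intro mult_left_mono) auto
    finally have a: "real Nc * exp E / NU \<le> exp E * rate2" .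
    have "B * real d / real F + exp E * ((exp E - exp (-E)) / sqrt k + real Nc * exp E / NU)
        \<le> rate2 + exp E * (4 * cc * exp E * rate2 + exp E * rate2)"
      using t1 t3 a by (intro add_mono mult_left_mono) auto
    also have "\<dots> = rate2 + exp (2 * E) * ((4 * cc + 1) * rate2)"
      by (simp add: exp_add[symmetric] algebra_simps mult_2)
    also have "\<dots> \<le> exp (2 * E) * rate2 + exp (2 * E) * ((4 * cc + 1) * rate2)"
      using r2p' E0 by (intro add_mono) auto
    also have "\<dots> = exp (2 * E) * ((2 + 4 * cc) * rate2)" by (simp add: algebra_simps)
    also have "\<dots> \<le> exp (2 * cc * (B / t)) * ((2 + 4 * cc) * rate2)"
      using Ebound r2p' cc0 by (intro mult_right_mono) auto
    finally show ?thesis by (simp add: mult_ac)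
  qed
  show ?thesis
  proof (rule rand_alg_bound[where \<Omega>="Om (real ` {..<NU}) k"
        and \<Psi>="\<lambda>\<omega>. PsiR m B ?xs ?fl NU k \<omega>" and \<Phi>="\<lambda>\<omega>. PhiR m B ?xs ?fl NU k F \<omega>"])
    have "0 \<in> {..<NU}" using NU1 by simp
    then have Uf: "finite (real ` {..<NU})" "real ` {..<NU} \<noteq> {}" by auto
    show "finite (Om (real ` {..<NU}) k)" by (rule Om_finite[OF Uf(1)])
    show "Om (real ` {..<NU}) k \<noteq> {}" by (rule Om_ne[OF Uf(2)])
    show "\<forall>\<omega> ys. PsiR m B ?xs ?fl NU k \<omega> ys \<in> cube" using PsiR_cube[OF F1] by blast
    show "\<forall>f\<in>(Fclass m B :: (real^'d \<Rightarrow> real) set).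
        (\<Sum>\<omega>\<in>Om (real ` {..<NU}) k. \<bar>logint f - PhiR m B ?xs ?fl NU k F \<omega> (info (PsiR m B ?xs ?fl NU k \<omega>) f n)\<bar>)
          / card (Om (real ` {..<NU}) k)
        \<le> (2 + 4 * cE m CARD('d)) * exp (2 * cE m CARD('d) * (B * real n powr (- (real m / real CARD('d)))))
           * (B * real n powr (- 1/2 - real m / real CARD('d)))"
    proof
      fix f :: "real^'d \<Rightarrow> real" assume f: "f \<in> Fclass m B"
      have "(\<Sum>\<omega>\<in>Om (real ` {..<NU}) k. \<bar>logint f - PhiR m B ?xs ?fl NU k F \<omega> (info (PsiR m B ?xs ?fl NU k \<omega>) f n)\<bar>)
          / card (Om (real ` {..<NU}) k)
        \<le> B * real CARD('d) / real F + exp E * ((exp E - exp (-E)) / sqrt k + real (length ?fl) * exp E / NU)"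
        unfolding E_def by (rule rand_error[OF m1 K1 F1 NU1 k1 f lenk])
      also have "\<dots> \<le> (2 + 4 * cc) * exp (2 * cc * (B / t)) * rate2"
        using main by (simp add: d_def Nc_def)
      also have "\<dots> = (2 + 4 * cE m CARD('d)) * exp (2 * cE m CARD('d) * (B * real n powr (- (real m / real CARD('d)))))
           * (B * real n powr (- 1/2 - real m / real CARD('d)))"
        unfolding e1 e2 by (simp add: cc_def d_def rate2_def)
      finally show "(\<Sum>\<omega>\<in>Om (real ` {..<NU}) k. \<bar>logint f - PhiR m B ?xs ?fl NU k F \<omega> (info (PsiR m B ?xs ?fl NU k \<omega>) f n)\<bar>)
          / card (Om (real ` {..<NU}) k)
        \<le> (2 + 4 * cE m CARD('d)) * exp (2 * cE m CARD('d) * (B * real n powr (- (real m / real CARD('d)))))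
           * (B * real n powr (- 1/2 - real m / real CARD('d)))" .
    qed
  qed
qed



theorem theorem6:
  fixes m :: nat
  assumes "m \<ge> 1"
  shows "\<exists>C>0. \<exists>C'>0. \<forall>B>0. \<forall>n::nat. n \<ge> 1 \<longrightarrow>
     sigma_ad TYPE(nat \<Rightarrow> real) n (Fclass m B :: (real^'d \<Rightarrow> real) set) logint
       \<le> ennreal (C' * min (B * real n powr (- (real m / real CARD('d))))
                        (exp (C * B * real n powr (- (real m / real CARD('d))))
                           * B * real n powr (- 1/2 - real m / real CARD('d))))"
proof -
  define d where "d = CARD('d)"
  have d1: "d \<ge> 1" unfolding d_def by (rule card_ge1)
  define P :: nat where "P = 2^m"
  define ce where "ce = cE m d"
  have b0: "beta m d \<ge> 0" by (rule beta_nonneg)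
  have ce0: "ce \<ge> 0" using b0 by (simp add: ce_def cE_def)
  define cd where "cd = cdet m d"
  have cd1: "cd \<ge> 1"
  proof -
    have "(1::real) * 1 * 1 \<le> (beta m d + 1) * 2^m * 2^(m*m)" using b0 by (intro mult_mono) auto
    then show ?thesis by (simp add: cd_def cdet_def)
  qed
  define C where "C = 2 * ce + 1"
  define C' where "C' = max cd (max (2 + 4 * ce) (cd * sqrt (2 * real P ^ d)))"
  have Cp: "C > 0" using ce0 by (simp add: C_def)
  have C'p: "C' > 0" using cd1 by (simp add: C'_def)
  show ?thesis
  proof (rule exI[of _ C], rule conjI[OF Cp], rule exI[of _ C'], rule conjI[OF C'p], intro allI impI)
    fix B :: real and n :: nat
    assume B: "B > 0" and n: "n \<ge> 1"
    let ?a = "B * real n powr (- (real m / real CARD('d)))"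
    let ?r = "B * real n powr (- 1/2 - real m / real CARD('d))"
    let ?b = "exp (C * B * real n powr (- (real m / real CARD('d)))) * B * real n powr (- 1/2 - real m / real CARD('d))"
    let ?S = "sigma_ad TYPE(nat \<Rightarrow> real) n (Fclass m B :: (real^'d \<Rightarrow> real) set) logint"
    have rnp: "real n > 0" using n by simp
    have a0: "?a \<ge> 0" using B by simp
    have r0: "?r \<ge> 0" using B by simp
    have bb: "?b = exp (C * ?a) * ?r" by (simp add: mult_ac)
    have S1: "?S \<le> ennreal (cd * ?a)"
      using det_main[OF B n, where 'd='d and m=m] by (simp add: cd_def d_def mult_ac)
    have S2: "?S \<le> ennreal (C' * ?b)"
    proof (cases "n \<ge> 2 * (2^m)^CARD('d)")
      case True
      have "?S \<le> ennreal ((2 + 4 * ce) * exp (2 * ce * ?a) * ?r)"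
        using rand_case[OF assms B True] by (simp add: ce_def d_def)
      also have "\<dots> \<le> ennreal (C' * ?b)"
      proof (rule ennreal_leI)
        have "exp (2 * ce * ?a) \<le> exp (C * ?a)" using a0 by (simp add: C_def mult_right_mono)
        then have "(2 + 4 * ce) * exp (2 * ce * ?a) * ?r \<le> C' * exp (C * ?a) * ?r"
          using ce0 r0 by (intro mult_right_mono mult_mono) (auto simp: C'_def)
        then show "(2 + 4 * ce) * exp (2 * ce * ?a) * ?r \<le> C' * ?b" by (simp add: bb mult_ac)
      qed
      finally show ?thesis .
    next
      case False
      then have nsmall: "real n \<le> 2 * real P ^ d" by (simp add: P_def d_def flip: of_nat_power)
      have split: "?a = sqrt (real n) * ?r"
      proof -
        have "?r = B * (1 / (sqrt (real n) * real n powr (real m / real CARD('d))))"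
          using powr_split[OF rnp, of "real m / real CARD('d)"] by simp
        moreover have "?a = B * (1 / real n powr (real m / real CARD('d)))"
          by (simp add: powr_minus_divide)
        ultimately show ?thesis using rnp by simp
      qed
      have "cd * ?a = cd * sqrt (real n) * ?r" using split by simp
      also have "\<dots> \<le> cd * sqrt (2 * real P ^ d) * ?r"
        using nsmall cd1 r0 by (intro mult_right_mono mult_left_mono) auto
      also have "\<dots> \<le> C' * 1 * ?r" using r0 by (intro mult_right_mono) (auto simp: C'_def)
      also have "\<dots> \<le> C' * exp (C * ?a) * ?r"
        using r0 C'p a0 Cp by (intro mult_right_mono mult_left_mono) auto
      also have "\<dots> = C' * ?b" by (simp add: bb mult_ac)
      finally have "cd * ?a \<le> C' * ?b" .
      then show ?thesis using S1 ennreal_leI order_trans by blast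
    qed
    show "?S \<le> ennreal (C' * min ?a ?b)"
    proof (cases "?a \<le> ?b")
      case True
      have "cd * ?a \<le> C' * ?a" using a0 by (intro mult_right_mono) (auto simp: C'_def)
      then show ?thesis using S1 True by (simp add: min_def) (meson ennreal_leI order_trans)
    next
      case False
      then show ?thesis using S2 by (simp add: min_def)
    qed
  qed
qed


end
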